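(* Let $(T_1,\dots,T_k)$ be a tuple of contractions on a Hilbert space $\mathcal{H}$ and $q_{ij}\in\mathbb{T}$ ($1\le i<j\le k$) with $T_iT_j=q_{ij}T_jT_i$ for $1\le i<j\le k$. Let $G_{dc}$ be the group described in the context and define $T:G_{dc}\to\mathcal{B}(\mathcal{H})$ by \[ T\Big(\prod_{1\le i<j\le k}q_{ij}^{m_{ij}}s_1^{m_1}\cdots s_k^{m_k}\Big)=\prod_{1\le i<j\le k}q_{ij}^{m_{ij}}\prod_{1\le i<j\le k}q_{ij}^{-m_i^+m_j^-}\big[(T_1^{m_1^-})^*\cdots(T_k^{m_k^-})^*\big]\big[T_1^{m_1^+}\cdots T_k^{m_k^+}\big], \] where on the right the $q_{ij}$ are the given scalars. Then $T$ is positive definite if and only if \[ S(u)=\sum_{v\subseteq u}(-1)^{|v|}T(x^{e(v)})^*T(x^{e(v)})\ge0 \] for every subset $u$ of $\{1,\dots,k\}$.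
   Context: For an integer $m$, $m^+=\max\{m,0\}$ and $m^-=-\min\{m,0\}$. The group $G_{dc}$ consists of formal elements $x^m=\prod_{1\le i<j\le k}q_{ij}^{m_{ij}}s_1^{m_1}\cdots s_k^{m_k}$ indexed by $m=(m_{ij}\,(1\le i<j\le k);\,m_1,\dots,m_k)$ with all entries in $\mathbb{Z}$, where $s_1,\dots,s_k$ and $q_{ij}$ are indeterminates subject to $s_is_j=q_{ij}s_js_i$, $s_is_j^{-1}=q_{ij}^{-1}s_j^{-1}s_i$ ($i<j$), with the $q_{ij}$ central; concretely the product is $x^mx^n=\prod_{1\le i<j\le k}q_{ij}^{-n_im_j}\,x^{m+n}$, the identity is $x^0$ and $(x^m)^{-1}=\prod_{i<j}q_{ij}^{-m_im_j}x^{-m}$. For $v\subseteq\{1,\dots,k\}$, $x^{e(v)}=s_1^{e_1}\cdots s_k^{e_k}$ with $e_l=1$ if $l\in v$ and $0$ otherwise (all $q_{ij}$-exponents zero); so $T(x^{e(v)})$ is the product of the $T_l$, $l\in v$, in increasing order. A function $T:G\to\mathcal{B}(\mathcal{H})$ on a group $G$ is positive definite if $T(s^{-1})=T(s)^*$ for all $s$ and $\sum_{s,t\in G}\langle T(t^{-1}s)h(s),h(t)\rangle\ge0$ for every finitely supported $h:G\to\mathcal{H}$. *)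

theory Defs
  imports "HOL-Algebra.Group" Complex_Main
begin

class chilbert = ab_group_add +
  fixes scaleC :: "complex \<Rightarrow> 'a \<Rightarrow> 'a"
    and cinner :: "'a \<Rightarrow> 'a \<Rightarrow> complex"
  assumes scaleC_add_right: "scaleC a (x + y) = scaleC a x + scaleC a y"
    and scaleC_add_left: "scaleC (a + b) x = scaleC a x + scaleC b x"
    and scaleC_scaleC: "scaleC a (scaleC b x) = scaleC (a * b) x"
    and scaleC_one: "scaleC 1 x = x"
    and cinner_add_left: "cinner (x + y) z = cinner x z + cinner y z"
    and cinner_scaleC_left: "cinner (scaleC a x) y = a * cinner x y"
    and cinner_commute: "cinner x y = cnj (cinner y x)"
    and cinner_self_nonneg: "Im (cinner x x) = 0 \<and> 0 \<le> Re (cinner x x)"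
    and cinner_self_zero: "cinner x x = 0 \<Longrightarrow> x = 0"
    and complete:
      "(\<forall>e>0. \<exists>N::nat. \<forall>m\<ge>N. \<forall>n\<ge>N.
            sqrt (Re (cinner (X m - X n) (X m - X n))) < e)
       \<Longrightarrow> \<exists>L. \<forall>e>0. \<exists>N::nat. \<forall>n\<ge>N.
            sqrt (Re (cinner (X n - L) (X n - L))) < e"

definition cnorm :: "'a::chilbert \<Rightarrow> real" where
  "cnorm x = sqrt (Re (cinner x x))"

definition bounded_op :: "('a::chilbert \<Rightarrow> 'a) \<Rightarrow> bool" where
  "bounded_op A \<longleftrightarrow> (\<forall>x y. A (x + y) = A x + A y) \<and> (\<forall>c x. A (scaleC c x) = scaleC c (A x))
     \<and> (\<exists>K. \<forall>x. cnorm (A x) \<le> K * cnorm x)"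

definition contraction :: "('a::chilbert \<Rightarrow> 'a) \<Rightarrow> bool" where
  "contraction A \<longleftrightarrow> bounded_op A \<and> (\<forall>x. cnorm (A x) \<le> cnorm x)"

definition adj :: "('a::chilbert \<Rightarrow> 'a) \<Rightarrow> ('a \<Rightarrow> 'a)" where
  "adj A = (SOME B. bounded_op B \<and> (\<forall>x y. cinner (A x) y = cinner x (B y)))"

definition cnonneg :: "complex \<Rightarrow> bool" where
  "cnonneg z \<longleftrightarrow> Im z = 0 \<and> 0 \<le> Re z"

definition positive_op :: "('a::chilbert \<Rightarrow> 'a) \<Rightarrow> bool" where
  "positive_op A \<longleftrightarrow> (\<forall>h. cnonneg (cinner (A h) h))"

fun ordprod :: "nat \<Rightarrow> (nat \<Rightarrow> 'a \<Rightarrow> 'a) \<Rightarrow> 'a \<Rightarrow> 'a" where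
  "ordprod 0 A = id"
| "ordprod (Suc n) A = ordprod n A \<circ> A (Suc n)"

definition positive_definite ::
  "('g, 'b) monoid_scheme \<Rightarrow> ('g \<Rightarrow> 'a::chilbert \<Rightarrow> 'a) \<Rightarrow> bool" where
  "positive_definite G T \<longleftrightarrow>
     (\<forall>s\<in>carrier G. T (inv\<^bsub>G\<^esub> s) = adj (T s)) \<and>
     (\<forall>h :: 'g \<Rightarrow> 'a. finite {s\<in>carrier G. h s \<noteq> 0} \<longrightarrow>
        (let F = {s\<in>carrier G. h s \<noteq> 0} in
          cnonneg (\<Sum>s\<in>F. \<Sum>t\<in>F. cinner (T (inv\<^bsub>G\<^esub> t \<otimes>\<^bsub>G\<^esub> s) (h s)) (h t))))"

text \<open>An element x^m is encoded by the pair (mq, ms) with mq i j = m_ij (1 \<le> i < j \<le> k)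
  and ms i = m_i (1 \<le> i \<le> k); all other entries are 0.\<close>
type_synonym gdc_elem = "(nat \<Rightarrow> nat \<Rightarrow> int) \<times> (nat \<Rightarrow> int)"

definition gdc_carrier :: "nat \<Rightarrow> gdc_elem set" where
  "gdc_carrier k = {(mq, ms). (\<forall>i j. \<not> (1 \<le> i \<and> i < j \<and> j \<le> k) \<longrightarrow> mq i j = 0)
                             \<and> (\<forall>i. \<not> (1 \<le> i \<and> i \<le> k) \<longrightarrow> ms i = 0)}"

text \<open>x^m x^n = prod q_ij^(- n_i m_j) x^(m+n).\<close>
definition gdc_mult :: "nat \<Rightarrow> gdc_elem \<Rightarrow> gdc_elem \<Rightarrow> gdc_elem" where
  "gdc_mult k m n =
     ((\<lambda>i j. if 1 \<le> i \<and> i < j \<and> j \<le> k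
             then fst m i j + fst n i j - snd n i * snd m j else 0),
      (\<lambda>i. snd m i + snd n i))"

definition Gdc :: "nat \<Rightarrow> gdc_elem monoid" where
  "Gdc k = \<lparr>carrier = gdc_carrier k, mult = gdc_mult k, one = (\<lambda>i j. 0, \<lambda>i. 0)\<rparr>"

definition gdc_e :: "nat \<Rightarrow> nat set \<Rightarrow> gdc_elem" where
  "gdc_e k v = (\<lambda>i j. 0, \<lambda>l. if l \<in> v \<and> 1 \<le> l \<and> l \<le> k then 1 else 0)"

definition pos_part :: "int \<Rightarrow> nat" where "pos_part m = nat (max m 0)"
definition neg_part :: "int \<Rightarrow> nat" where "neg_part m = nat (- min m 0)"

definition Tdc :: "nat \<Rightarrow> (nat \<Rightarrow> nat \<Rightarrow> complex) \<Rightarrow> (nat \<Rightarrow> 'a::chilbert \<Rightarrow> 'a)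
                    \<Rightarrow> gdc_elem \<Rightarrow> 'a \<Rightarrow> 'a" where
  "Tdc k q T m = (\<lambda>h.
     scaleC ((\<Prod>(i,j)\<in>{(i,j). 1 \<le> i \<and> i < j \<and> j \<le> k}. q i j powi fst m i j)
           * (\<Prod>(i,j)\<in>{(i,j). 1 \<le> i \<and> i < j \<and> j \<le> k}.
                 q i j powi (- (int (pos_part (snd m i)) * int (neg_part (snd m j))))))
       ((ordprod k (\<lambda>l. adj (T l ^^ neg_part (snd m l)))
         \<circ> ordprod k (\<lambda>l. T l ^^ pos_part (snd m l))) h))"

definition S_op :: "nat \<Rightarrow> (nat \<Rightarrow> nat \<Rightarrow> complex) \<Rightarrow> (nat \<Rightarrow> 'a::chilbert \<Rightarrow> 'a)
                    \<Rightarrow> nat set \<Rightarrow> 'a \<Rightarrow> 'a" where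
  "S_op k q T u = (\<lambda>h. \<Sum>v\<in>Pow u. scaleC ((-1) ^ card v)
        (adj (Tdc k q T (gdc_e k v)) (Tdc k q T (gdc_e k v) h)))"

end

theory Submission
  imports Defs
begin

section \<open>Basic algebra in chilbert\<close>

lemma scaleC_zero_right[simp]: "scaleC a (0::'a::chilbert) = 0"
  using scaleC_add_right[of a "0::'a" 0] by simp

lemma scaleC_zero_left[simp]: "scaleC 0 (x::'a::chilbert) = 0"
  using scaleC_add_left[of 0 0 x] by simp

lemma scaleC_minus_right: "scaleC a (- (x::'a::chilbert)) = - scaleC a x"
  using scaleC_add_right[of a x "-x"] by (simp add: eq_neg_iff_add_eq_0 add.commute)

lemma scaleC_minus_left: "scaleC (- a) (x::'a::chilbert) = - scaleC a x"
  using scaleC_add_left[of a "-a" x] by (simp add: eq_neg_iff_add_eq_0 add.commute)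

lemma scaleC_diff_right: "scaleC a ((x::'a::chilbert) - y) = scaleC a x - scaleC a y"
  using scaleC_add_right[of a x "-y"] by (simp add: scaleC_minus_right)

lemma scaleC_diff_left: "scaleC (a - b) (x::'a::chilbert) = scaleC a x - scaleC b x"
  using scaleC_add_left[of a "-b" x] by (simp add: scaleC_minus_left)

lemma scaleC_sum_right: "scaleC a (\<Sum>i\<in>I. f i) = (\<Sum>i\<in>I. scaleC a (f i :: 'a::chilbert))"
  by (induction I rule: infinite_finite_induct) (auto simp: scaleC_add_right)

lemma scaleC_sum_left: "scaleC (\<Sum>i\<in>I. f i) (x::'a::chilbert) = (\<Sum>i\<in>I. scaleC (f i) x)"
  by (induction I rule: infinite_finite_induct) (auto simp: scaleC_add_left)

lemma cinner_zero_left[simp]: "cinner (0::'a::chilbert) y = 0"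
  using cinner_add_left[of "0::'a" 0 y] by simp

lemma cinner_minus_left: "cinner (- (x::'a::chilbert)) y = - cinner x y"
  using cinner_add_left[of x "-x" y] by (simp add: eq_neg_iff_add_eq_0 add.commute)

lemma cinner_diff_left: "cinner ((x::'a::chilbert) - z) y = cinner x y - cinner z y"
  using cinner_add_left[of x "-z" y] by (simp add: cinner_minus_left)

lemma cinner_sum_left: "cinner (\<Sum>i\<in>I. f i) (y::'a::chilbert) = (\<Sum>i\<in>I. cinner (f i) y)"
  by (induction I rule: infinite_finite_induct) (auto simp: cinner_add_left)

lemma cinner_cnj: "cnj (cinner (x::'a::chilbert) y) = cinner y x"
  using cinner_commute[of y x] by simp

lemma cinner_add_right: "cinner (x::'a::chilbert) (y + z) = cinner x y + cinner x z"
  by (metis cinner_add_left cinner_commute complex_cnj_add)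

lemma cinner_scaleC_right: "cinner (x::'a::chilbert) (scaleC a y) = cnj a * cinner x y"
  by (metis cinner_commute cinner_scaleC_left complex_cnj_cnj complex_cnj_mult)

lemma cinner_zero_right[simp]: "cinner (x::'a::chilbert) 0 = 0"
  by (metis cinner_commute cinner_zero_left complex_cnj_zero)

lemma cinner_minus_right: "cinner (x::'a::chilbert) (- y) = - cinner x y"
  by (metis cinner_commute cinner_minus_left complex_cnj_minus)

lemma cinner_diff_right: "cinner (x::'a::chilbert) (y - z) = cinner x y - cinner x z"
  by (metis cinner_commute cinner_diff_left complex_cnj_diff)

lemma cinner_sum_right: "cinner (y::'a::chilbert) (\<Sum>i\<in>I. f i) = (\<Sum>i\<in>I. cinner y (f i))"
  by (induction I rule: infinite_finite_induct) (auto simp: cinner_add_right)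

lemma cinner_self_real: "cinner (x::'a::chilbert) x = complex_of_real (Re (cinner x x))"
  using cinner_self_nonneg[of x] by (simp add: complex_eq_iff)

lemma cinner_self_Re_nonneg: "0 \<le> Re (cinner (x::'a::chilbert) x)"
  using cinner_self_nonneg[of x] by simp

lemma cinner_self_eq_0: "cinner (x::'a::chilbert) x = 0 \<longleftrightarrow> x = 0"
  using cinner_self_zero by auto

lemma cinner_self_Re_eq_0: "Re (cinner (x::'a::chilbert) x) = 0 \<longleftrightarrow> x = 0"
  by (metis cinner_self_eq_0 cinner_self_real of_real_0 zero_complex.simps(1))

lemma cinner_ext: "(\<And>x. cinner x (u::'a::chilbert) = cinner x v) \<Longrightarrow> u = v"
proof -
  assume h: "\<And>x. cinner x u = cinner x v"
  have "cinner (u - v) (u - v) = 0" using h[of "u-v"] by (simp add: cinner_diff_right)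
  hence "u - v = 0" by (simp only: cinner_self_eq_0)
  thus ?thesis by simp
qed

lemma cnorm_sq: "(cnorm (x::'a::chilbert))^2 = Re (cinner x x)"
  unfolding cnorm_def using cinner_self_Re_nonneg by simp

lemma cnorm_nonneg: "0 \<le> cnorm (x::'a::chilbert)"
  unfolding cnorm_def using cinner_self_Re_nonneg by simp

lemma cauchy_schwarz: "(cmod (cinner (x::'a::chilbert) y))^2 \<le> Re (cinner x x) * Re (cinner y y)"
proof (cases "y = 0")
  case True thus ?thesis by simp
next
  case False
  define r where "r = Re (cinner y y)"
  have r0: "r > 0" using False cinner_self_Re_eq_0 cinner_self_Re_nonneg r_def
    by (metis order_le_less)
  have yy: "cinner y y = complex_of_real r" using cinner_self_real r_def by simp
  define c where "c = cinner x y"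
  define t where "t = c / complex_of_real r"
  have yx: "cinner y x = cnj c" by (simp add: c_def cinner_cnj)
  have "cinner (x - scaleC t y) (x - scaleC t y)
      = cinner x x - cnj t * c - t * cnj c + t * cnj t * cinner y y"
    using yx by (simp add: cinner_diff_left cinner_diff_right cinner_scaleC_left cinner_scaleC_right
        c_def algebra_simps)
  also have "\<dots> = cinner x x - c * cnj c / complex_of_real r"
    using r0 by (simp add: t_def yy field_simps)
  finally have "0 \<le> Re (cinner x x - c * cnj c / complex_of_real r)"
    by (metis cinner_self_Re_nonneg)
  moreover have "c * cnj c = complex_of_real ((cmod c)^2)" by (rule complex_norm_square[symmetric])
  ultimately have "(cmod c)^2 / r \<le> Re (cinner x x)"
    by (simp add: Re_divide_of_real)
  thus ?thesis using r0 by (simp add: c_def r_def field_simps)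
qed

lemma cinner_bound: "cmod (cinner (x::'a::chilbert) y) \<le> cnorm x * cnorm y"
proof -
  have "(cmod (cinner x y))^2 \<le> (cnorm x * cnorm y)^2"
    using cauchy_schwarz[of x y] by (simp add: power_mult_distrib cnorm_sq)
  thus ?thesis using cnorm_nonneg
    by (meson mult_nonneg_nonneg power2_le_imp_le)
qed

lemma cnorm_triangle: "cnorm ((x::'a::chilbert) + y) \<le> cnorm x + cnorm y"
proof -
  have rc0: "Re (cinner y x) = Re (cnj (cinner x y))" by (simp only: cinner_cnj)
  have rc: "Re (cinner y x) = Re (cinner x y)" using rc0 by simp
  have e: "(cnorm (x+y))^2 = (cnorm x)^2 + (cnorm y)^2 + 2 * Re (cinner x y)"
    unfolding cnorm_sq by (simp add: cinner_add_left cinner_add_right rc)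
  have b: "Re (cinner x y) \<le> cnorm x * cnorm y"
    using cinner_bound[of x y] complex_Re_le_cmod order_trans by blast
  have "(cnorm (x+y))^2 \<le> (cnorm x)^2 + (cnorm y)^2 + 2 * (cnorm x * cnorm y)"
    using e b by linarith
  also have "\<dots> = (cnorm x + cnorm y)^2" by (simp add: power2_sum)
  finally have "(cnorm (x+y))^2 \<le> (cnorm x + cnorm y)^2" .
  thus ?thesis using cnorm_nonneg
    by (meson add_nonneg_nonneg power2_le_imp_le)
qed

lemma cnorm_scaleC: "cnorm (scaleC a (x::'a::chilbert)) = cmod a * cnorm x"
proof -
  have "cinner (scaleC a x) (scaleC a x) = (a * cnj a) * cinner x x"
    by (simp add: cinner_scaleC_left cinner_scaleC_right mult.assoc)
  also have "a * cnj a = complex_of_real ((cmod a)^2)" by (rule complex_norm_square[symmetric])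
  finally have "cinner (scaleC a x) (scaleC a x) = complex_of_real ((cmod a)^2) * cinner x x" .
  hence "Re (cinner (scaleC a x) (scaleC a x)) = (cmod a)^2 * Re (cinner x x)"
    by simp
  thus ?thesis unfolding cnorm_def by (simp add: real_sqrt_mult)
qed

lemma cnorm_minus: "cnorm (- (x::'a::chilbert)) = cnorm x"
  unfolding cnorm_def by (simp add: cinner_minus_left cinner_minus_right)

lemma cnorm_diff_sym: "cnorm ((x::'a::chilbert) - y) = cnorm (y - x)"
  by (metis cnorm_minus minus_diff_eq)

lemma cnorm_zero[simp]: "cnorm (0::'a::chilbert) = 0"
  unfolding cnorm_def by simp

lemma cnorm_eq_0: "cnorm (x::'a::chilbert) = 0 \<longleftrightarrow> x = 0"
  unfolding cnorm_def using cinner_self_Re_eq_0 cinner_self_Re_nonneg by simp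

lemma cinner_self_expand_diff:
  "cinner ((x::'a::chilbert) - scaleC t y) (x - scaleC t y)
     = cinner x x - cnj t * cinner x y - t * cinner y x + t * cnj t * cinner y y"
  by (simp add: cinner_diff_left cinner_diff_right cinner_scaleC_left cinner_scaleC_right algebra_simps)

lemma parallelogram:
  "cinner ((x::'a::chilbert) - y) (x - y) + cinner (x + y) (x + y) = 2 * cinner x x + 2 * cinner y y"
  by (simp add: cinner_diff_left cinner_diff_right cinner_add_left cinner_add_right algebra_simps)

lemma mult_cnj_self: "c * cnj c = (complex_of_real (cmod c))^2"
  using complex_norm_square[of c] by simp

lemma cnj_mult_self: "cnj c * c = (complex_of_real (cmod c))^2"
  using mult_cnj_self[of c] by (simp add: mult.commute)

lemma riesz:
  fixes f :: "'a::chilbert \<Rightarrow> complex"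
  assumes add: "\<And>x y. f (x + y) = f x + f y"
    and hom: "\<And>c x. f (scaleC c x) = c * f x"
    and bnd: "\<And>x. cmod (f x) \<le> K * cnorm x"
  shows "\<exists>z. \<forall>x. f x = cinner x z"
proof (cases "\<forall>x. f x = 0")
  case True thus ?thesis by (intro exI[of _ 0]) simp
next
  case False
  then obtain x0 where x0: "f x0 \<noteq> 0" by auto
  have f0: "f 0 = 0" using hom[of 0 0] by simp
  have fdiff: "f (x - y) = f x - f y" for x y
    using add[of "x - y" y] by simp
  define x1 where "x1 = scaleC (1 / f x0) x0"
  have fx1: "f x1 = 1" using x0 by (simp add: x1_def hom)
  define A where "A = {Re (cinner y y) | y. f y = 1}"
  define D where "D = Inf A"
  have Ane: "A \<noteq> {}" using fx1 A_def by blast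
  have Abdd: "bdd_below A" unfolding A_def bdd_below_def using cinner_self_Re_nonneg by blast
  have D_le: "D \<le> Re (cinner y y)" if "f y = 1" for y
    unfolding D_def using that Abdd by (intro cInf_lower) (auto simp: A_def)
  have D_nonneg: "0 \<le> D" using D_le[OF fx1] unfolding D_def
    using Ane by (intro cInf_greatest) (auto simp: A_def cinner_self_Re_nonneg)
  have approx: "\<exists>y. f y = 1 \<and> Re (cinner y y) < D + e" if "e > 0" for e
  proof -
    have "Inf A < D + e" using that D_def by simp
    then obtain a where "a \<in> A" "a < D + e" using cInf_lessD[OF Ane] by blast
    thus ?thesis unfolding A_def by blast
  qed
  have "\<forall>n. \<exists>y. f y = 1 \<and> Re (cinner y y) < D + 1 / real (Suc n)"
    using approx by simp
  then obtain Y where Y1: "\<And>n. f (Y n) = 1" and Y2: "\<And>n. Re (cinner (Y n) (Y n)) < D + 1 / real (Suc n)"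
    by metis
  have para: "Re (cinner (y - y') (y - y')) \<le> 2 * Re (cinner y y) + 2 * Re (cinner y' y') - 4 * D"
    if "f y = 1" "f y' = 1" for y y'
  proof -
    define w where "w = scaleC (1/2) (y + y')"
    have "f w = 1" using that by (simp add: w_def hom add)
    hence "D \<le> Re (cinner w w)" by (rule D_le)
    also have "cinner w w = cinner (y + y') (y + y') / 4"
      by (simp add: w_def cinner_scaleC_left cinner_scaleC_right)
    finally have "4 * D \<le> Re (cinner (y + y') (y + y'))" by simp
    moreover have "Re (cinner (y - y') (y - y')) + Re (cinner (y + y') (y + y'))
        = 2 * Re (cinner y y) + 2 * Re (cinner y' y')"
      using arg_cong[OF parallelogram[of y y'], of Re] by simp
    ultimately show ?thesis by linarith
  qed
  have cauchy: "\<forall>e>0. \<exists>N::nat. \<forall>m\<ge>N. \<forall>n\<ge>N. sqrt (Re (cinner (Y m - Y n) (Y m - Y n))) < e"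
  proof (intro allI impI)
    fix e :: real assume e: "e > 0"
    obtain N :: nat where N: "4 / (e * e) < real N" using reals_Archimedean2 by blast
    have "\<forall>m\<ge>N. \<forall>n\<ge>N. sqrt (Re (cinner (Y m - Y n) (Y m - Y n))) < e"
    proof (intro allI impI)
      fix m n assume mn: "N \<le> m" "N \<le> n"
      have ee: "0 < e * e" using e by simp
      have "4 / real (Suc N) < e * e"
        using N ee by (simp add: field_simps)
      moreover have "1 / real (Suc m) \<le> 1 / real (Suc N)" "1 / real (Suc n) \<le> 1 / real (Suc N)"
        using mn by (simp_all add: frac_le)
      moreover have "Re (cinner (Y m - Y n) (Y m - Y n)) \<le> 2 * Re (cinner (Y m) (Y m)) + 2 * Re (cinner (Y n) (Y n)) - 4 * D"
        using para Y1 by blast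
      ultimately have "Re (cinner (Y m - Y n) (Y m - Y n)) < e * e"
        using Y2[of m] Y2[of n] by linarith
      hence "sqrt (Re (cinner (Y m - Y n) (Y m - Y n))) < sqrt (e * e)"
        by (simp only: real_sqrt_less_iff)
      thus "sqrt (Re (cinner (Y m - Y n) (Y m - Y n))) < e" using e by simp
    qed
    thus "\<exists>N::nat. \<forall>m\<ge>N. \<forall>n\<ge>N. sqrt (Re (cinner (Y m - Y n) (Y m - Y n))) < e" by blast
  qed
  have "\<exists>L. \<forall>e>0. \<exists>N::nat. \<forall>n\<ge>N. sqrt (Re (cinner (Y n - L) (Y n - L))) < e"
    by (rule complete[of Y, OF cauchy])
  then obtain L where L0: "\<forall>e>0. \<exists>N::nat. \<forall>n\<ge>N. sqrt (Re (cinner (Y n - L) (Y n - L))) < e"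
    by blast
  have L: "\<exists>N::nat. \<forall>n\<ge>N. cnorm (Y n - L) < e" if "e > 0" for e
    using L0 that unfolding cnorm_def by blast
  have fL: "f L = 1"
  proof -
    have "cmod (f L - 1) \<le> 0 + e" if e: "e > 0" for e
    proof -
      define e' where "e' = e / (\<bar>K\<bar> + 1)"
      have e': "e' > 0" using e by (simp add: e'_def)
      obtain N where "\<forall>n\<ge>N. cnorm (Y n - L) < e'" using L[OF e'] by blast
      hence c: "cnorm (Y N - L) < e'" by simp
      have "f L - 1 = - f (Y N - L)" using Y1[of N] by (simp add: fdiff)
      hence "cmod (f L - 1) = cmod (f (Y N - L))" by simp
      also have "\<dots> \<le> K * cnorm (Y N - L)" by (rule bnd)
      also have "\<dots> \<le> \<bar>K\<bar> * e'" using c cnorm_nonneg[of "Y N - L"]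
        by (smt (verit) abs_ge_self abs_not_less_zero mult_le_cancel_left mult_less_cancel_right)
      also have "\<dots> \<le> e" using e by (simp add: e'_def field_simps)
      finally show ?thesis by simp
    qed
    hence "cmod (f L - 1) \<le> 0" by (rule field_le_epsilon)
    thus ?thesis by simp
  qed
  have LD: "cnorm L \<le> sqrt D"
  proof (rule field_le_epsilon)
    fix d :: real assume d: "d > 0"
    define e where "e = min 1 ((d/2)^2)"
    have e1: "e > 0" using d by (simp add: e_def)
    have e2: "e \<le> 1" by (simp add: e_def)
    have "e \<le> (d/2)^2" by (simp add: e_def)
    hence "sqrt e \<le> sqrt ((d/2)^2)" by (rule real_sqrt_le_mono)
    hence e3: "sqrt e \<le> d/2" using d by simp
    have e: "e > 0" "e \<le> 1" "sqrt e \<le> d/2" using e1 e2 e3 by auto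
    have s1: "sqrt e \<le> 1" using e2 by simp
    have s2: "sqrt e * sqrt e = e" using e1 by (simp add: less_imp_le)
    have s3: "0 \<le> sqrt e" using e1 by simp
    have ese: "e \<le> sqrt e" using mult_left_mono[OF s1 s3] s2 by simp
    obtain N1 where N1: "\<forall>n\<ge>N1. cnorm (Y n - L) < e" using L[OF e(1)] by blast
    obtain N2 :: nat where N2: "1 / e < real N2" using reals_Archimedean2 by blast
    define n where "n = max N1 N2"
    have c1: "cnorm (Y n - L) < e" using N1 n_def by simp
    have "1 / real (Suc n) < e"
      using N2 e(1) n_def by (simp add: field_simps) (smt (verit) of_nat_le_iff max.cobounded2 mult_left_mono)
    hence "Re (cinner (Y n) (Y n)) < D + e" using Y2[of n] by linarith
    hence "cnorm (Y n) \<le> sqrt (D + e)" unfolding cnorm_def by simp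
    also have "\<dots> \<le> sqrt D + sqrt e" using D_nonneg e1 by (intro sqrt_add_le_add_sqrt) auto
    finally have c2: "cnorm (Y n) \<le> sqrt D + sqrt e" .
    have "cnorm L \<le> cnorm (Y n) + cnorm (L - Y n)"
      using cnorm_triangle[of "Y n" "L - Y n"] by simp
    also have "cnorm (L - Y n) < e" using c1 cnorm_diff_sym by metis
    finally show "cnorm L \<le> sqrt D + d" using c2 e ese by linarith
  qed
  have LL: "Re (cinner L L) = D"
  proof -
    have "Re (cinner L L) \<le> D" using LD D_nonneg unfolding cnorm_def by simp
    thus ?thesis using D_le[OF fL] by simp
  qed
  have orth: "cinner x L = 0" if fx: "f x = 0" for x
  proof -
    define c where "c = cinner x L"
    define s where "s = 1 / (Re (cinner x x) + 1)"
    have s0: "s > 0" using cinner_self_Re_nonneg[of x] by (simp add: s_def)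
    have s1: "s * Re (cinner x x) < 1" using cinner_self_Re_nonneg[of x] by (simp add: s_def field_simps)
    define t where "t = complex_of_real s * cnj c"
    have "f (L - scaleC t x) = 1" using fL fx by (simp add: fdiff hom)
    hence "D \<le> Re (cinner (L - scaleC t x) (L - scaleC t x))" by (rule D_le)
    also have "cinner (L - scaleC t x) (L - scaleC t x) = cinner L L - cnj t * cnj c - t * c + t * cnj t * cinner x x"
      using cinner_self_expand_diff[of L t x] by (simp add: c_def cinner_cnj)
    also have "cnj t * cnj c = complex_of_real (s * (cmod c)^2)"
      by (simp add: t_def mult_cnj_self mult.assoc)
    also have "t * c = complex_of_real (s * (cmod c)^2)"
      by (simp add: t_def cnj_mult_self mult.assoc)
    also have "t * cnj t = complex_of_real (s^2 * (cmod c)^2)"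
      by (simp add: t_def power2_eq_square mult.assoc mult.left_commute cnj_mult_self[unfolded power2_eq_square])
    finally have "D \<le> D - 2 * (s * (cmod c)^2) + s^2 * (cmod c)^2 * Re (cinner x x)"
      using LL cinner_self_real[of x] by simp
    hence "0 \<le> s * (cmod c)^2 * (s * Re (cinner x x) - 2)" by (simp add: algebra_simps power2_eq_square)
    moreover have "s * Re (cinner x x) - 2 < 0" using s1 by simp
    ultimately have "s * (cmod c)^2 \<le> 0" by (meson linorder_not_le mult_pos_neg)
    hence "(cmod c)^2 \<le> 0" using s0 by (simp add: mult_le_0_iff)
    thus ?thesis by (simp add: c_def)
  qed
  have D0: "D \<noteq> 0"
  proof
    assume "D = 0"
    hence "L = 0" using LL cinner_self_Re_eq_0 by metis
    thus False using fL f0 by simp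
  qed
  show ?thesis
  proof (intro exI allI)
    fix x
    have "f (x - scaleC (f x) L) = 0" using fL by (simp add: fdiff hom)
    hence "cinner (x - scaleC (f x) L) L = 0" by (rule orth)
    hence "cinner x L = f x * cinner L L" by (simp add: cinner_diff_left cinner_scaleC_left)
    hence "cinner x L = f x * complex_of_real D" using LL cinner_self_real[of L] by simp
    thus "f x = cinner x (scaleC (complex_of_real (1 / D)) L)"
      using D0 by (simp add: cinner_scaleC_right)
  qed
qed


section \<open>Bounded operators and adjoints\<close>

lemma bop_add: "bounded_op A \<Longrightarrow> A (x + y) = A x + A y"
  unfolding bounded_op_def by blast
lemma bop_scale: "bounded_op A \<Longrightarrow> A (scaleC c x) = scaleC c (A x)"
  unfolding bounded_op_def by blast
lemma bop_zero: "bounded_op (A::'a::chilbert \<Rightarrow> 'a) \<Longrightarrow> A 0 = 0"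
  using bop_scale[of A 0 0] by simp
lemma bop_minus: "bounded_op (A::'a::chilbert \<Rightarrow> 'a) \<Longrightarrow> A (- x) = - A x"
  using bop_add[of A x "-x"] bop_zero[of A] by (simp add: eq_neg_iff_add_eq_0 add.commute)
lemma bop_diff: "bounded_op (A::'a::chilbert \<Rightarrow> 'a) \<Longrightarrow> A (x - y) = A x - A y"
  using bop_add[of A x "-y"] bop_minus[of A y] by simp
lemma bop_sum: "bounded_op (A::'a::chilbert \<Rightarrow> 'a) \<Longrightarrow> A (\<Sum>i\<in>I. f i) = (\<Sum>i\<in>I. A (f i))"
  by (induction I rule: infinite_finite_induct) (auto simp: bop_zero bop_add)
lemma bop_bound: "bounded_op A \<Longrightarrow> \<exists>K. \<forall>x. cnorm (A x) \<le> K * cnorm x"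
  unfolding bounded_op_def by blast

lemma bounded_op_id[simp]: "bounded_op (id :: 'a::chilbert \<Rightarrow> 'a)"
  unfolding bounded_op_def by (auto intro: exI[of _ 1])

lemma bounded_op_comp:
  assumes "bounded_op (A::'a::chilbert \<Rightarrow> 'a)" "bounded_op B" shows "bounded_op (A \<circ> B)"
proof -
  obtain K1 where K1: "\<And>x. cnorm (A x) \<le> K1 * cnorm x" using bop_bound[OF assms(1)] by blast
  obtain K2 where K2: "\<And>x. cnorm (B x) \<le> K2 * cnorm x" using bop_bound[OF assms(2)] by blast
  have "cnorm (A (B x)) \<le> (max K1 0 * max K2 0) * cnorm x" for x
  proof -
    have "cnorm (A (B x)) \<le> K1 * cnorm (B x)" by (rule K1)
    also have "\<dots> \<le> max K1 0 * cnorm (B x)" using cnorm_nonneg[of "B x"] by (intro mult_right_mono) auto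
    also have "\<dots> \<le> max K1 0 * (K2 * cnorm x)" using K2 by (simp add: mult_left_mono)
    also have "\<dots> \<le> max K1 0 * (max K2 0 * cnorm x)" using cnorm_nonneg
      by (intro mult_left_mono mult_right_mono) auto
    finally show ?thesis by (simp add: mult.assoc)
  qed
  thus ?thesis using assms unfolding bounded_op_def by auto
qed

lemma bounded_op_scal:
  assumes "bounded_op (A::'a::chilbert \<Rightarrow> 'a)" shows "bounded_op (\<lambda>h. scaleC c (A h))"
proof -
  obtain K where K: "\<And>x. cnorm (A x) \<le> K * cnorm x" using bop_bound[OF assms] by blast
  have b: "cnorm (scaleC c (A x)) \<le> (cmod c * K) * cnorm x" for x
    using K[of x] by (simp add: cnorm_scaleC mult.assoc mult_left_mono)
  have l1: "scaleC c (A (x + y)) = scaleC c (A x) + scaleC c (A y)" for x y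
    using assms by (simp add: bop_add scaleC_add_right)
  have l2: "scaleC c (A (scaleC d x)) = scaleC d (scaleC c (A x))" for d x
    using assms by (simp add: bop_scale scaleC_scaleC mult.commute)
  show ?thesis unfolding bounded_op_def using l1 l2 b by blast
qed

lemma bounded_op_funpow: "bounded_op (A::'a::chilbert \<Rightarrow> 'a) \<Longrightarrow> bounded_op (A ^^ n)"
  by (induction n) (auto simp: id_def[symmetric] intro: bounded_op_comp)

lemma bounded_op_zero_op: "bounded_op (\<lambda>h::'a::chilbert. 0)"
  unfolding bounded_op_def by (auto intro!: exI[of _ 0])

lemma adj_exists:
  assumes A: "bounded_op (A::'a::chilbert \<Rightarrow> 'a)"
  shows "\<exists>B. bounded_op B \<and> (\<forall>x y. cinner (A x) y = cinner x (B y))"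
proof -
  obtain K where K: "\<And>x. cnorm (A x) \<le> K * cnorm x" using bop_bound[OF A] by blast
  have "\<exists>z. \<forall>x. cinner (A x) y = cinner x z" for y
  proof (rule riesz)
    show "cinner (A (x + x')) y = cinner (A x) y + cinner (A x') y" for x x'
      by (simp add: bop_add[OF A] cinner_add_left)
    show "cinner (A (scaleC c x)) y = c * cinner (A x) y" for c x
      by (simp add: bop_scale[OF A] cinner_scaleC_left)
    show "cmod (cinner (A x) y) \<le> (K * cnorm y) * cnorm x" for x
    proof -
      have "cmod (cinner (A x) y) \<le> cnorm (A x) * cnorm y" by (rule cinner_bound)
      also have "\<dots> \<le> K * cnorm x * cnorm y" using K[of x] cnorm_nonneg[of y] by (rule mult_right_mono)
      finally show ?thesis by (simp add: algebra_simps)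
    qed
  qed
  then obtain B where B: "\<And>x y. cinner (A x) y = cinner x (B y)" by metis
  have Badd: "B (y + y') = B y + B y'" for y y'
    by (rule cinner_ext) (simp add: B[symmetric] cinner_add_right)
  have Bscale: "B (scaleC c y) = scaleC c (B y)" for c y
    by (rule cinner_ext) (simp add: B[symmetric] cinner_scaleC_right)
  have Bbnd: "cnorm (B y) \<le> max K 0 * cnorm y" for y
  proof (cases "cnorm (B y) = 0")
    case True thus ?thesis using cnorm_nonneg[of y] by simp
  next
    case False
    hence pos: "cnorm (B y) > 0" using cnorm_nonneg[of "B y"] by simp
    have "(cnorm (B y))^2 = Re (cinner (B y) (B y))" by (rule cnorm_sq)
    also have "cinner (B y) (B y) = cinner (A (B y)) y" by (simp add: B)
    also have "Re (cinner (A (B y)) y) \<le> cmod (cinner (A (B y)) y)" by (rule complex_Re_le_cmod)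
    also have "\<dots> \<le> cnorm (A (B y)) * cnorm y" by (rule cinner_bound)
    also have "\<dots> \<le> K * cnorm (B y) * cnorm y" using K[of "B y"] cnorm_nonneg[of y] by (rule mult_right_mono)
    finally have "cnorm (B y) * cnorm (B y) \<le> cnorm (B y) * (K * cnorm y)"
      by (simp add: power2_eq_square algebra_simps)
    hence "cnorm (B y) \<le> K * cnorm y" using pos by simp
    also have "\<dots> \<le> max K 0 * cnorm y" using cnorm_nonneg[of y] by (simp add: mult_right_mono)
    finally show ?thesis .
  qed
  have "bounded_op B" unfolding bounded_op_def using Badd Bscale Bbnd by blast
  thus ?thesis using B by blast
qed

lemma adj_prop:
  assumes "bounded_op (A::'a::chilbert \<Rightarrow> 'a)"
  shows "bounded_op (adj A) \<and> (\<forall>x y. cinner (A x) y = cinner x (adj A y))"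
  unfolding adj_def by (rule someI_ex[OF adj_exists[OF assms]])

lemma bounded_op_adj: "bounded_op (A::'a::chilbert \<Rightarrow> 'a) \<Longrightarrow> bounded_op (adj A)"
  using adj_prop by blast

lemma adj_right: "bounded_op (A::'a::chilbert \<Rightarrow> 'a) \<Longrightarrow> cinner x (adj A y) = cinner (A x) y"
  using adj_prop by metis

lemma adj_left: "bounded_op (A::'a::chilbert \<Rightarrow> 'a) \<Longrightarrow> cinner (adj A x) y = cinner x (A y)"
  by (metis adj_right cinner_cnj)

lemma adj_eqI:
  assumes "bounded_op (A::'a::chilbert \<Rightarrow> 'a)" "\<And>x y. cinner (A x) y = cinner x (B y)"
  shows "adj A = B"
proof
  fix y show "adj A y = B y"
    by (rule cinner_ext) (simp add: adj_right[OF assms(1)] assms(2))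
qed

lemma adj_comp:
  assumes "bounded_op (A::'a::chilbert \<Rightarrow> 'a)" "bounded_op B"
  shows "adj (A \<circ> B) = adj B \<circ> adj A"
  by (rule adj_eqI[OF bounded_op_comp[OF assms]]) (simp add: adj_right assms)

lemma adj_id[simp]: "adj (id :: 'a::chilbert \<Rightarrow> 'a) = id"
  by (rule adj_eqI) auto

lemma adj_scal:
  assumes "bounded_op (A::'a::chilbert \<Rightarrow> 'a)"
  shows "adj (\<lambda>h. scaleC c (A h)) = (\<lambda>h. scaleC (cnj c) (adj A h))"
  by (rule adj_eqI[OF bounded_op_scal[OF assms]])
     (simp add: cinner_scaleC_left cinner_scaleC_right adj_right[OF assms])

lemma adj_adj:
  assumes "bounded_op (A::'a::chilbert \<Rightarrow> 'a)" shows "adj (adj A) = A"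
  by (rule adj_eqI[OF bounded_op_adj[OF assms]]) (simp add: adj_left[OF assms])

lemma adj_funpow:
  assumes "bounded_op (A::'a::chilbert \<Rightarrow> 'a)" shows "adj (A ^^ n) = adj A ^^ n"
proof (induction n)
  case 0 show ?case using adj_id by (simp add: id_def)
next
  case (Suc n)
  have "adj (A ^^ Suc n) = adj (A \<circ> A ^^ n)" by simp
  also have "\<dots> = adj (A ^^ n) \<circ> adj A" by (rule adj_comp[OF assms bounded_op_funpow[OF assms]])
  also have "\<dots> = adj A ^^ Suc n" using Suc by (simp only: funpow_Suc_right)
  finally show ?case .
qed


section \<open>The group G_dc\<close>

definition gdc_inv :: "nat \<Rightarrow> gdc_elem \<Rightarrow> gdc_elem" where
  "gdc_inv k x = ((\<lambda>i j. if 1 \<le> i \<and> i < j \<and> j \<le> k then - fst x i j - snd x i * snd x j else 0),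
                  (\<lambda>i. - snd x i))"

lemma gdc_carrier_iff:
  "x \<in> gdc_carrier k \<longleftrightarrow> (\<forall>i j. \<not> (1 \<le> i \<and> i < j \<and> j \<le> k) \<longrightarrow> fst x i j = 0)
                          \<and> (\<forall>i. \<not> (1 \<le> i \<and> i \<le> k) \<longrightarrow> snd x i = 0)"
  by (cases x) (simp add: gdc_carrier_def)

lemma Gdc_simps[simp]: "carrier (Gdc k) = gdc_carrier k" "mult (Gdc k) = gdc_mult k"
  "one (Gdc k) = (\<lambda>i j. 0, \<lambda>i. 0)"
  by (simp_all add: Gdc_def)

lemma gdc_mult_fst: "fst (gdc_mult k x y) i j =
   (if 1 \<le> i \<and> i < j \<and> j \<le> k then fst x i j + fst y i j - snd y i * snd x j else 0)"
  by (simp add: gdc_mult_def)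

lemma gdc_mult_snd: "snd (gdc_mult k x y) i = snd x i + snd y i"
  by (simp add: gdc_mult_def)

lemma gdc_inv_fst: "fst (gdc_inv k x) i j =
   (if 1 \<le> i \<and> i < j \<and> j \<le> k then - fst x i j - snd x i * snd x j else 0)"
  by (simp add: gdc_inv_def)

lemma gdc_inv_snd: "snd (gdc_inv k x) i = - snd x i"
  by (simp add: gdc_inv_def)

lemma gdc_eqI: "(\<And>i j. fst x i j = fst y i j) \<Longrightarrow> (\<And>i. snd x i = snd y i) \<Longrightarrow> (x::gdc_elem) = y"
  by (cases x, cases y) (auto intro: ext)

lemma group_Gdc: "group (Gdc k)"
proof (rule groupI)
  fix x y assume "x \<in> carrier (Gdc k)" "y \<in> carrier (Gdc k)"
  thus "x \<otimes>\<^bsub>Gdc k\<^esub> y \<in> carrier (Gdc k)"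
    by (simp add: gdc_carrier_iff gdc_mult_fst gdc_mult_snd)
next
  show "\<one>\<^bsub>Gdc k\<^esub> \<in> carrier (Gdc k)" by (simp add: gdc_carrier_iff)
next
  fix x y z assume "x \<in> carrier (Gdc k)" "y \<in> carrier (Gdc k)" "z \<in> carrier (Gdc k)"
  show "x \<otimes>\<^bsub>Gdc k\<^esub> y \<otimes>\<^bsub>Gdc k\<^esub> z = x \<otimes>\<^bsub>Gdc k\<^esub> (y \<otimes>\<^bsub>Gdc k\<^esub> z)"
    by (rule gdc_eqI) (simp_all add: gdc_mult_fst gdc_mult_snd algebra_simps)
next
  fix x assume x: "x \<in> carrier (Gdc k)"
  thus "\<one>\<^bsub>Gdc k\<^esub> \<otimes>\<^bsub>Gdc k\<^esub> x = x"
    by (intro gdc_eqI) (auto simp: gdc_mult_fst gdc_mult_snd gdc_carrier_iff)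
next
  fix x assume x: "x \<in> carrier (Gdc k)"
  have "gdc_inv k x \<in> carrier (Gdc k)" using x by (simp add: gdc_carrier_iff gdc_inv_fst gdc_inv_snd)
  moreover have "gdc_inv k x \<otimes>\<^bsub>Gdc k\<^esub> x = \<one>\<^bsub>Gdc k\<^esub>"
    by (intro gdc_eqI) (simp_all add: gdc_mult_fst gdc_mult_snd gdc_inv_fst gdc_inv_snd algebra_simps)
  ultimately show "\<exists>y\<in>carrier (Gdc k). y \<otimes>\<^bsub>Gdc k\<^esub> x = \<one>\<^bsub>Gdc k\<^esub>" by blast
qed

lemma Gdc_inv: assumes x: "x \<in> carrier (Gdc k)" shows "inv\<^bsub>Gdc k\<^esub> x = gdc_inv k x"
proof (rule group.inv_equality[OF group_Gdc])
  show "gdc_inv k x \<in> carrier (Gdc k)" using x by (simp add: gdc_carrier_iff gdc_inv_fst gdc_inv_snd)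
  show "gdc_inv k x \<otimes>\<^bsub>Gdc k\<^esub> x = \<one>\<^bsub>Gdc k\<^esub>"
    by (intro gdc_eqI) (simp_all add: gdc_mult_fst gdc_mult_snd gdc_inv_fst gdc_inv_snd algebra_simps)
  show "x \<in> carrier (Gdc k)" by (rule x)
qed


definition QN :: "nat \<Rightarrow> (nat \<Rightarrow> nat \<Rightarrow> complex) \<Rightarrow> (nat \<Rightarrow> nat \<Rightarrow> int) \<Rightarrow> complex" where
  "QN n q f = (\<Prod>(i,j)\<in>{(i,j). 1 \<le> i \<and> i < j \<and> j \<le> n}. q i j powi f i j)"

lemma finite_pairs: "finite {(i,j). 1 \<le> i \<and> i < j \<and> j \<le> (n::nat)}"
  by (rule finite_subset[of _ "{1..n} \<times> {1..n}"]) auto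

lemma finite_pairs'[simp]: "finite {(i,j). Suc 0 \<le> i \<and> i < j \<and> j \<le> (n::nat)}"
  using finite_pairs[of n] by simp

lemma QN_cong: "(\<And>i j. 1 \<le> i \<Longrightarrow> i < j \<Longrightarrow> j \<le> n \<Longrightarrow> f i j = g i j) \<Longrightarrow> QN n q f = QN n q g"
  unfolding QN_def by (rule prod.cong) auto

lemma QN_zero[simp]: "QN n q (\<lambda>i j. 0) = 1"
  unfolding QN_def by simp

lemma QN_add:
  assumes "\<And>i j. 1 \<le> i \<Longrightarrow> i < j \<Longrightarrow> j \<le> n \<Longrightarrow> q i j \<noteq> 0"
  shows "QN n q (\<lambda>i j. f i j + g i j) = QN n q f * QN n q g"
  unfolding QN_def prod.distrib[symmetric]
  by (rule prod.cong) (auto simp: power_int_add assms)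

lemma cnj_unimod: "cmod z = 1 \<Longrightarrow> cnj z = inverse z"
  by (metis complex_norm_square mult_cnj_self cnj_mult_self inverse_unique mult.commute norm_one
      of_real_1 one_power2 mult_cnj_self)

lemma QN_cnj:
  assumes "\<And>i j. 1 \<le> i \<Longrightarrow> i < j \<Longrightarrow> j \<le> n \<Longrightarrow> cmod (q i j) = 1"
  shows "cnj (QN n q f) = QN n q (\<lambda>i j. - f i j)"
  unfolding QN_def cnj_prod
  by (rule prod.cong) (auto simp: cnj_unimod assms power_int_minus power_int_inverse)

lemma QN_nonzero:
  assumes "\<And>i j. 1 \<le> i \<Longrightarrow> i < j \<Longrightarrow> j \<le> n \<Longrightarrow> q i j \<noteq> 0"
  shows "QN n q f \<noteq> 0"
proof -
  have "(\<Prod>(i,j)\<in>{(i,j). 1 \<le> i \<and> i < j \<and> j \<le> n}. q i j powi f i j) \<noteq> 0"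
    unfolding prod_zero_iff[OF finite_pairs] by (auto simp: assms power_int_not_zero)
  thus ?thesis unfolding QN_def .
qed

lemma QN_Suc: "QN (Suc n) q f = QN n q f * (\<Prod>l\<in>{1..n}. q l (Suc n) powi f l (Suc n))"
proof -
  have S: "{(i,j). 1 \<le> i \<and> i < j \<and> j \<le> Suc n} = {(i,j). 1 \<le> i \<and> i < j \<and> j \<le> n} \<union> (\<lambda>l. (l, Suc n)) ` {1..n}"
    by auto
  have "QN (Suc n) q f = QN n q f * (\<Prod>p\<in>(\<lambda>l. (l, Suc n)) ` {1..n}. (case p of (i,j) \<Rightarrow> q i j powi f i j))"
    unfolding QN_def S by (rule prod.union_disjoint) (auto simp: finite_pairs)
  also have "(\<Prod>p\<in>(\<lambda>l. (l, Suc n)) ` {1..n}. (case p of (i,j) \<Rightarrow> q i j powi f i j))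
      = (\<Prod>l\<in>{1..n}. q l (Suc n) powi f l (Suc n))"
    by (subst prod.reindex) (auto simp: inj_on_def)
  finally show ?thesis .
qed


fun revprod :: "nat \<Rightarrow> (nat \<Rightarrow> 'a \<Rightarrow> 'a) \<Rightarrow> 'a \<Rightarrow> 'a" where
  "revprod 0 B = id"
| "revprod (Suc n) B = B (Suc n) \<circ> revprod n B"

lemma adj_id'[simp]: "adj (\<lambda>x::'a::chilbert. x) = (\<lambda>x. x)"
  using adj_id by (simp add: id_def)

lemma QN_0[simp]: "QN 0 q f = 1"
proof -
  have "{(i,j). 1 \<le> i \<and> i < j \<and> j \<le> (0::nat)} = {}" by auto
  thus ?thesis unfolding QN_def by (simp only:) simp
qed

lemma ordprod_Suc_apply: "ordprod (Suc n) B x = ordprod n B (B (Suc n) x)"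
  by simp

lemma ordprod_cong: "(\<And>l. 1 \<le> l \<Longrightarrow> l \<le> n \<Longrightarrow> B l = B' l) \<Longrightarrow> ordprod n B = ordprod n B'"
  by (induction n) auto

lemma revprod_cong: "(\<And>l. 1 \<le> l \<Longrightarrow> l \<le> n \<Longrightarrow> B l = B' l) \<Longrightarrow> revprod n B = revprod n B'"
  by (induction n) auto

lemma ordprod_bnd: "(\<And>l. 1 \<le> l \<Longrightarrow> l \<le> n \<Longrightarrow> bounded_op (B l)) \<Longrightarrow> bounded_op (ordprod n (B :: nat \<Rightarrow> 'a::chilbert \<Rightarrow> 'a))"
  by (induction n) (auto intro!: bounded_op_comp)

lemma revprod_bnd: "(\<And>l. 1 \<le> l \<Longrightarrow> l \<le> n \<Longrightarrow> bounded_op (B l)) \<Longrightarrow> bounded_op (revprod n (B :: nat \<Rightarrow> 'a::chilbert \<Rightarrow> 'a))"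
  by (induction n) (auto intro!: bounded_op_comp)

lemma adj_ordprod:
  "(\<And>l. 1 \<le> l \<Longrightarrow> l \<le> n \<Longrightarrow> bounded_op (B l)) \<Longrightarrow>
    adj (ordprod n (B :: nat \<Rightarrow> 'a::chilbert \<Rightarrow> 'a)) = revprod n (\<lambda>l. adj (B l))"
proof (induction n)
  case 0 thus ?case by simp
next
  case (Suc n)
  have "adj (ordprod (Suc n) B) = adj (ordprod n B \<circ> B (Suc n))" by simp
  also have "\<dots> = adj (B (Suc n)) \<circ> adj (ordprod n B)"
    using Suc.prems by (intro adj_comp ordprod_bnd) auto
  also have "adj (ordprod n B) = revprod n (\<lambda>l. adj (B l))" using Suc by auto
  finally show ?case by simp
qed

lemma adj_revprod:
  "(\<And>l. 1 \<le> l \<Longrightarrow> l \<le> n \<Longrightarrow> bounded_op (B l)) \<Longrightarrow>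
    adj (revprod n (B :: nat \<Rightarrow> 'a::chilbert \<Rightarrow> 'a)) = ordprod n (\<lambda>l. adj (B l))"
proof (induction n)
  case 0 thus ?case by simp
next
  case (Suc n)
  have "adj (revprod (Suc n) B) = adj (B (Suc n) \<circ> revprod n B)" by simp
  also have "\<dots> = adj (revprod n B) \<circ> adj (B (Suc n))"
    using Suc.prems by (intro adj_comp revprod_bnd) auto
  also have "adj (revprod n B) = ordprod n (\<lambda>l. adj (B l))" using Suc by auto
  finally show ?case by simp
qed

locale qfam =
  fixes k :: nat and q :: "nat \<Rightarrow> nat \<Rightarrow> complex" and A :: "nat \<Rightarrow> 'a::chilbert \<Rightarrow> 'a"
  assumes bnd: "\<And>i. 1 \<le> i \<Longrightarrow> i \<le> k \<Longrightarrow> bounded_op (A i)"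
    and qc: "\<And>i j. 1 \<le> i \<Longrightarrow> i < j \<Longrightarrow> j \<le> k \<Longrightarrow> cmod (q i j) = 1"
    and comm: "\<And>i j. 1 \<le> i \<Longrightarrow> i < j \<Longrightarrow> j \<le> k \<Longrightarrow> A i \<circ> A j = (\<lambda>h. scaleC (q i j) (A j (A i h)))"
begin

lemma qnz: "1 \<le> i \<Longrightarrow> i < j \<Longrightarrow> j \<le> k \<Longrightarrow> q i j \<noteq> 0"
  using qc by fastforce

lemma comm_pt: "1 \<le> i \<Longrightarrow> i < j \<Longrightarrow> j \<le> k \<Longrightarrow> A i (A j x) = scaleC (q i j) (A j (A i x))"
  using fun_cong[OF comm, of i j x] by simp

lemma bnd_pow: "1 \<le> i \<Longrightarrow> i \<le> k \<Longrightarrow> bounded_op (A i ^^ b)"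
  by (rule bounded_op_funpow[OF bnd])

lemma comm1:
  assumes "1 \<le> i" "i < j" "j \<le> k"
  shows "A i ((A j ^^ b) x) = scaleC (q i j ^ b) ((A j ^^ b) (A i x))"
proof (induction b arbitrary: x)
  case 0 thus ?case by (simp add: scaleC_one)
next
  case (Suc b)
  have "A i ((A j ^^ Suc b) x) = A i (A j ((A j ^^ b) x))" by simp
  also have "\<dots> = scaleC (q i j) (A j (A i ((A j ^^ b) x)))" using assms by (rule comm_pt)
  also have "\<dots> = scaleC (q i j) (A j (scaleC (q i j ^ b) ((A j ^^ b) (A i x))))" using Suc by simp
  also have "\<dots> = scaleC (q i j ^ Suc b) ((A j ^^ Suc b) (A i x))"
    using assms by (simp add: bop_scale[OF bnd] scaleC_scaleC)
  finally show ?case .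
qed

lemma comm2:
  assumes "1 \<le> i" "i < j" "j \<le> k"
  shows "(A i ^^ a) ((A j ^^ b) x) = scaleC (q i j ^ (a * b)) ((A j ^^ b) ((A i ^^ a) x))"
proof (induction a arbitrary: x)
  case 0 thus ?case by (simp add: scaleC_one)
next
  case (Suc a)
  have "(A i ^^ Suc a) ((A j ^^ b) x) = A i ((A i ^^ a) ((A j ^^ b) x))" by simp
  also have "\<dots> = A i (scaleC (q i j ^ (a * b)) ((A j ^^ b) ((A i ^^ a) x)))" using Suc by simp
  also have "\<dots> = scaleC (q i j ^ (a * b)) (A i ((A j ^^ b) ((A i ^^ a) x)))"
    using assms by (simp add: bop_scale[OF bnd])
  also have "\<dots> = scaleC (q i j ^ (a * b)) (scaleC (q i j ^ b) ((A j ^^ b) (A i ((A i ^^ a) x))))"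
    using assms by (simp add: comm1)
  also have "\<dots> = scaleC (q i j ^ (Suc a * b)) ((A j ^^ b) ((A i ^^ Suc a) x))"
    by (simp add: scaleC_scaleC power_add mult.commute)
  finally show ?case .
qed

lemma comm3:
  assumes "1 \<le> i" "i < j" "j \<le> k"
  shows "(A j ^^ b) ((A i ^^ a) x) = scaleC (q i j powi (- (int a * int b))) ((A i ^^ a) ((A j ^^ b) x))"
proof -
  have nz: "q i j ^ (a * b) \<noteq> 0" using qnz[OF assms] by simp
  have "scaleC (q i j powi (- (int a * int b))) ((A i ^^ a) ((A j ^^ b) x))
      = scaleC (inverse (q i j ^ (a * b))) (scaleC (q i j ^ (a * b)) ((A j ^^ b) ((A i ^^ a) x)))"
    using comm2[OF assms] by (simp add: power_int_minus flip: of_nat_mult)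
  also have "\<dots> = (A j ^^ b) ((A i ^^ a) x)" using nz by (simp add: scaleC_scaleC scaleC_one)
  finally show ?thesis by simp
qed

definition Pn :: "nat \<Rightarrow> (nat \<Rightarrow> nat) \<Rightarrow> 'a \<Rightarrow> 'a" where
  "Pn n a = ordprod n (\<lambda>l. A l ^^ a l)"

lemma Pn_0[simp]: "Pn 0 a = id" by (simp add: Pn_def)

lemma Pn_Suc: "Pn (Suc n) a x = Pn n a ((A (Suc n) ^^ a (Suc n)) x)"
  by (simp add: Pn_def)

lemma Pn_bnd: "n \<le> k \<Longrightarrow> bounded_op (Pn n a)"
  unfolding Pn_def by (rule ordprod_bnd) (auto intro: bnd_pow)

lemma move:
  assumes "n < j" "j \<le> k"
  shows "(A j ^^ b) (Pn n a x) = scaleC (\<Prod>l\<in>{1..n}. q l j powi (- (int b * int (a l)))) (Pn n a ((A j ^^ b) x))"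
  using assms(1)
proof (induction n arbitrary: x)
  case 0 thus ?case by (simp add: scaleC_one)
next
  case (Suc n)
  have IH: "(A j ^^ b) (Pn n a y) = scaleC (\<Prod>l\<in>{1..n}. q l j powi (- (int b * int (a l)))) (Pn n a ((A j ^^ b) y))" for y
    using Suc by simp
  have c3: "(A j ^^ b) ((A (Suc n) ^^ a (Suc n)) x)
      = scaleC (q (Suc n) j powi (- (int (a (Suc n)) * int b))) ((A (Suc n) ^^ a (Suc n)) ((A j ^^ b) x))"
    using Suc.prems assms by (intro comm3) auto
  have "(A j ^^ b) (Pn (Suc n) a x) = (A j ^^ b) (Pn n a ((A (Suc n) ^^ a (Suc n)) x))" by (simp add: Pn_Suc)
  also have "\<dots> = scaleC (\<Prod>l\<in>{1..n}. q l j powi (- (int b * int (a l))))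
      (Pn n a (scaleC (q (Suc n) j powi (- (int (a (Suc n)) * int b))) ((A (Suc n) ^^ a (Suc n)) ((A j ^^ b) x))))"
    by (simp add: IH c3)
  also have "\<dots> = scaleC ((\<Prod>l\<in>{1..n}. q l j powi (- (int b * int (a l)))) * q (Suc n) j powi (- (int b * int (a (Suc n)))))
      (Pn (Suc n) a ((A j ^^ b) x))"
    using Suc.prems assms by (simp add: bop_scale[OF Pn_bnd] scaleC_scaleC Pn_Suc mult.commute)
  also have "(\<Prod>l\<in>{1..n}. q l j powi (- (int b * int (a l)))) * q (Suc n) j powi (- (int b * int (a (Suc n))))
      = (\<Prod>l\<in>{1..Suc n}. q l j powi (- (int b * int (a l))))"
    by (simp add: prod.cl_ivl_Suc)
  finally show ?case .
qed

lemma prodP: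
  assumes "n \<le> k"
  shows "Pn n a (Pn n b x) = scaleC (QN n q (\<lambda>i j. - (int (b i) * int (a j)))) (Pn n (\<lambda>l. a l + b l) x)"
  using assms
proof (induction n arbitrary: x)
  case 0 thus ?case by (simp add: scaleC_one)
next
  case (Suc n)
  define c where "c = Suc n"
  have mv: "(A c ^^ a c) (Pn n b y) = scaleC (\<Prod>l\<in>{1..n}. q l c powi (- (int (a c) * int (b l)))) (Pn n b ((A c ^^ a c) y))" for y
    using Suc.prems by (intro move) (auto simp: c_def)
  have "Pn (Suc n) a (Pn (Suc n) b x) = Pn n a ((A c ^^ a c) (Pn n b ((A c ^^ b c) x)))"
    by (simp add: Pn_Suc c_def)
  also have "\<dots> = Pn n a (scaleC (\<Prod>l\<in>{1..n}. q l c powi (- (int (a c) * int (b l))))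
        (Pn n b ((A c ^^ a c) ((A c ^^ b c) x))))" by (simp add: mv)
  also have "\<dots> = scaleC (\<Prod>l\<in>{1..n}. q l c powi (- (int (a c) * int (b l))))
        (Pn n a (Pn n b ((A c ^^ (a c + b c)) x)))"
    using Suc.prems by (simp add: bop_scale[OF Pn_bnd] funpow_add)
  also have "\<dots> = scaleC ((\<Prod>l\<in>{1..n}. q l c powi (- (int (a c) * int (b l)))) * QN n q (\<lambda>i j. - (int (b i) * int (a j))))
        (Pn (Suc n) (\<lambda>l. a l + b l) x)"
    using Suc by (simp add: scaleC_scaleC Pn_Suc c_def)
  also have "(\<Prod>l\<in>{1..n}. q l c powi (- (int (a c) * int (b l)))) * QN n q (\<lambda>i j. - (int (b i) * int (a j)))
      = QN (Suc n) q (\<lambda>i j. - (int (b i) * int (a j)))"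
    by (simp add: QN_Suc c_def mult.commute)
  finally show ?case .
qed

lemma revP:
  assumes "n \<le> k"
  shows "revprod n (\<lambda>l. A l ^^ a l) x = scaleC (QN n q (\<lambda>i j. - (int (a i) * int (a j)))) (Pn n a x)"
  using assms
proof (induction n arbitrary: x)
  case 0 thus ?case by (simp add: scaleC_one)
next
  case (Suc n)
  define c where "c = Suc n"
  have mv: "(A c ^^ a c) (Pn n a y) = scaleC (\<Prod>l\<in>{1..n}. q l c powi (- (int (a c) * int (a l)))) (Pn n a ((A c ^^ a c) y))" for y
    using Suc.prems by (intro move) (auto simp: c_def)
  have "revprod (Suc n) (\<lambda>l. A l ^^ a l) x = (A c ^^ a c) (revprod n (\<lambda>l. A l ^^ a l) x)"
    by (simp add: c_def)
  also have "\<dots> = (A c ^^ a c) (scaleC (QN n q (\<lambda>i j. - (int (a i) * int (a j)))) (Pn n a x))"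
    using Suc by simp
  also have "\<dots> = scaleC (QN n q (\<lambda>i j. - (int (a i) * int (a j))) * (\<Prod>l\<in>{1..n}. q l c powi (- (int (a c) * int (a l)))))
       (Pn (Suc n) a x)"
  proof -
    have b: "bounded_op (A c ^^ a c)" using Suc.prems c_def by (intro bnd_pow) auto
    have p: "Pn (Suc n) a x = Pn n a ((A c ^^ a c) x)" by (simp add: Pn_Suc c_def)
    show ?thesis by (simp add: bop_scale[OF b] mv scaleC_scaleC p)
  qed
  also have "QN n q (\<lambda>i j. - (int (a i) * int (a j))) * (\<Prod>l\<in>{1..n}. q l c powi (- (int (a c) * int (a l))))
     = QN (Suc n) q (\<lambda>i j. - (int (a i) * int (a j)))"
    by (simp add: QN_Suc c_def mult.commute)
  finally show ?case .
qed

end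


lemma pos_neg_part: "int (pos_part x) - int (neg_part x) = x"
  by (simp add: pos_part_def neg_part_def)

lemma pos_part_uminus: "pos_part (- x) = neg_part x"
  by (simp add: pos_part_def neg_part_def)

lemma neg_part_uminus: "neg_part (- x) = pos_part x"
  by (simp add: pos_part_def neg_part_def)

locale qsys =
  fixes k :: nat and T :: "nat \<Rightarrow> 'a::chilbert \<Rightarrow> 'a" and q :: "nat \<Rightarrow> nat \<Rightarrow> complex"
  assumes contr: "\<And>i. 1 \<le> i \<Longrightarrow> i \<le> k \<Longrightarrow> contraction (T i)"
    and q_circle: "\<And>i j. 1 \<le> i \<Longrightarrow> i < j \<Longrightarrow> j \<le> k \<Longrightarrow> cmod (q i j) = 1"
    and q_comm: "\<And>i j. 1 \<le> i \<Longrightarrow> i < j \<Longrightarrow> j \<le> k \<Longrightarrow>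
                   T i \<circ> T j = (\<lambda>h. scaleC (q i j) (T j (T i h)))"
begin

lemma Tbnd: "1 \<le> i \<Longrightarrow> i \<le> k \<Longrightarrow> bounded_op (T i)"
  using contr contraction_def by blast

sublocale TF: qfam k q T
  by unfold_locales (auto simp: Tbnd q_circle q_comm)

lemma adj_comm:
  assumes ij: "1 \<le> i" "i < j" "j \<le> k"
  shows "adj (T i) \<circ> adj (T j) = (\<lambda>h. scaleC (q i j) (adj (T j) (adj (T i) h)))"
proof -
  have bi: "bounded_op (T i)" and bj: "bounded_op (T j)" using ij Tbnd by auto
  have "adj (T j) \<circ> adj (T i) = adj (T i \<circ> T j)" by (rule adj_comp[OF bi bj, symmetric])
  also have "T i \<circ> T j = (\<lambda>h. scaleC (q i j) ((T j \<circ> T i) h))" using q_comm[OF ij] by simp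
  also have "adj \<dots> = (\<lambda>h. scaleC (cnj (q i j)) (adj (T j \<circ> T i) h))"
    by (rule adj_scal[OF bounded_op_comp[OF bj bi]])
  also have "adj (T j \<circ> T i) = adj (T i) \<circ> adj (T j)" by (rule adj_comp[OF bj bi])
  finally have e: "\<And>h. adj (T j) (adj (T i) h) = scaleC (cnj (q i j)) (adj (T i) (adj (T j) h))"
    by (metis comp_apply)
  have qq: "q i j * cnj (q i j) = 1" using q_circle[OF ij]
    by (simp add: mult_cnj_self)
  show ?thesis
    by (rule ext) (simp add: e scaleC_scaleC qq scaleC_one)
qed

sublocale AF: qfam k q "\<lambda>l. adj (T l)"
  by unfold_locales (auto simp: Tbnd q_circle adj_comm bounded_op_adj)

definition P :: "(nat \<Rightarrow> nat) \<Rightarrow> 'a \<Rightarrow> 'a" where "P a = TF.Pn k a"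
definition Ps :: "(nat \<Rightarrow> nat) \<Rightarrow> 'a \<Rightarrow> 'a" where "Ps a = AF.Pn k a"

lemma P_bnd: "bounded_op (P a)" unfolding P_def by (rule TF.Pn_bnd) simp
lemma Ps_bnd: "bounded_op (Ps a)" unfolding Ps_def by (rule AF.Pn_bnd) simp

abbreviation QQ :: "(nat \<Rightarrow> nat \<Rightarrow> int) \<Rightarrow> complex" where "QQ f \<equiv> QN k q f"

lemma QQ_add: "QQ (\<lambda>i j. f i j + g i j) = QQ f * QQ g"
  by (rule QN_add) (use TF.qnz in auto)

lemma QQ_mult: "QQ f * QQ g = QQ (\<lambda>i j. f i j + g i j)"
  by (simp add: QQ_add)

lemma QQ_cong: "(\<And>i j. 1 \<le> i \<Longrightarrow> i < j \<Longrightarrow> j \<le> k \<Longrightarrow> f i j = g i j) \<Longrightarrow> QQ f = QQ g"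
  by (rule QN_cong)

lemma QQ_cnj: "cnj (QQ f) = QQ (\<lambda>i j. - f i j)"
  by (rule QN_cnj) (use q_circle in auto)

lemma QQ_nz: "QQ f \<noteq> 0"
  by (rule QN_nonzero) (use TF.qnz in auto)

lemma QQ_unimod: "QQ f * cnj (QQ f) = 1"
proof -
  have "QQ f * cnj (QQ f) = QQ (\<lambda>i j. f i j + - f i j)"
    by (simp only: QQ_add[of f "\<lambda>i j. - f i j"] QQ_cnj)
  thus ?thesis by simp
qed

lemma Ps_alt: "ordprod k (\<lambda>l. adj (T l ^^ a l)) = Ps a"
  unfolding Ps_def AF.Pn_def by (rule ordprod_cong) (simp add: adj_funpow Tbnd)

lemma P_alt: "ordprod k (\<lambda>l. T l ^^ a l) = P a"
  unfolding P_def TF.Pn_def ..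

lemma adj_P: "adj (P a) x = scaleC (QQ (\<lambda>i j. - (int (a i) * int (a j)))) (Ps a x)"
proof -
  have "adj (P a) = revprod k (\<lambda>l. adj (T l ^^ a l))"
    unfolding P_def TF.Pn_def by (rule adj_ordprod) (simp add: TF.bnd_pow)
  also have "\<dots> = revprod k (\<lambda>l. adj (T l) ^^ a l)"
    by (rule revprod_cong) (simp add: adj_funpow Tbnd)
  finally show ?thesis using AF.revP[of k a x] by (simp add: Ps_def)
qed

lemma adj_Ps: "adj (Ps a) x = scaleC (QQ (\<lambda>i j. - (int (a i) * int (a j)))) (P a x)"
proof -
  have "adj (Ps a) = revprod k (\<lambda>l. adj (adj (T l) ^^ a l))"
    unfolding Ps_def AF.Pn_def by (rule adj_ordprod) (simp add: AF.bnd_pow)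
  also have "\<dots> = revprod k (\<lambda>l. T l ^^ a l)"
    by (rule revprod_cong) (simp add: adj_funpow Tbnd adj_adj bounded_op_adj)
  finally show ?thesis using TF.revP[of k a x] by (simp add: P_def)
qed

lemma P_prod: "P a (P b x) = scaleC (QQ (\<lambda>i j. - (int (b i) * int (a j)))) (P (\<lambda>l. a l + b l) x)"
  unfolding P_def by (rule TF.prodP) simp

lemma Tdc_eq: "Tdc k q T m x =
   scaleC (QQ (fst m) * QQ (\<lambda>i j. - (int (pos_part (snd m i)) * int (neg_part (snd m j)))))
     (Ps (\<lambda>l. neg_part (snd m l)) (P (\<lambda>l. pos_part (snd m l)) x))"
  unfolding Tdc_def QN_def by (simp add: Ps_alt P_alt)

lemma Tdc_bnd: "bounded_op (Tdc k q T m)"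
proof -
  have "Tdc k q T m = (\<lambda>x. scaleC (QQ (fst m) * QQ (\<lambda>i j. - (int (pos_part (snd m i)) * int (neg_part (snd m j)))))
     ((Ps (\<lambda>l. neg_part (snd m l)) \<circ> P (\<lambda>l. pos_part (snd m l))) x))"
    by (rule ext) (simp add: Tdc_eq)
  moreover have "bounded_op (\<lambda>x. scaleC (QQ (fst m) * QQ (\<lambda>i j. - (int (pos_part (snd m i)) * int (neg_part (snd m j)))))
     ((Ps (\<lambda>l. neg_part (snd m l)) \<circ> P (\<lambda>l. pos_part (snd m l))) x))"
    by (rule bounded_op_scal[OF bounded_op_comp[OF Ps_bnd P_bnd]])
  ultimately show ?thesis by simp
qed

lemma Tdc_inv:
  assumes s: "s \<in> carrier (Gdc k)"
  shows "Tdc k q T (inv\<^bsub>Gdc k\<^esub> s) = adj (Tdc k q T s)"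
proof -
  define p where "p = (\<lambda>l. pos_part (snd s l))"
  define n where "n = (\<lambda>l. neg_part (snd s l))"
  define c where "c = QQ (fst s) * QQ (\<lambda>i j. - (int (p i) * int (n j)))"
  have Ts: "Tdc k q T s = (\<lambda>x. scaleC c ((Ps n \<circ> P p) x))"
    by (rule ext) (simp add: Tdc_eq c_def p_def n_def)
  have "adj (Tdc k q T s) = (\<lambda>x. scaleC (cnj c) (adj (Ps n \<circ> P p) x))"
    unfolding Ts by (rule adj_scal) (use bounded_op_comp[OF Ps_bnd P_bnd] in \<open>simp add: comp_def\<close>)
  also have "adj (Ps n \<circ> P p) = adj (P p) \<circ> adj (Ps n)"
    by (rule adj_comp) (simp_all add: Ps_bnd P_bnd)
  finally have A: "adj (Tdc k q T s) x = scaleC (cnj c * QQ (\<lambda>i j. - (int (p i) * int (p j))) * QQ (\<lambda>i j. - (int (n i) * int (n j))))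
       (Ps p (P n x))" for x
    by (simp add: adj_P adj_Ps bop_scale[OF Ps_bnd] scaleC_scaleC mult.assoc)
  have B: "Tdc k q T (inv\<^bsub>Gdc k\<^esub> s) x = scaleC (QQ (fst (gdc_inv k s)) * QQ (\<lambda>i j. - (int (n i) * int (p j))))
       (Ps p (P n x))" for x
    by (simp add: Gdc_inv[OF s] Tdc_eq gdc_inv_snd pos_part_uminus neg_part_uminus p_def n_def)
  have C: "cnj c * QQ (\<lambda>i j. - (int (p i) * int (p j))) * QQ (\<lambda>i j. - (int (n i) * int (n j)))
      = QQ (fst (gdc_inv k s)) * QQ (\<lambda>i j. - (int (n i) * int (p j)))"
  proof -
    have sp: "snd s i = int (p i) - int (n i)" for i by (simp add: p_def n_def pos_neg_part)
    show ?thesis unfolding c_def complex_cnj_mult QQ_cnj QQ_mult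
      by (rule QQ_cong) (simp add: gdc_inv_fst sp algebra_simps)
  qed
  show ?thesis by (rule ext) (simp add: A B C)
qed

end


lemma sum_list_map_concat: "sum_list (map f (concat xss)) = sum_list (map (\<lambda>xs. sum_list (map f xs)) xss)"
  by (induction xss) auto

lemma sum_list_zero': "sum_list (map (\<lambda>x. 0) xs) = 0"
  by (induction xs) auto

lemma sum_list_add_split: "sum_list (map (\<lambda>(a,b). f a b + g a b) xs) =
   sum_list (map (\<lambda>(a,b). f a b) xs) + sum_list (map (\<lambda>(a,b). (g a b :: 'c::comm_monoid_add)) xs)"
  by (induction xs) (auto simp: algebra_simps)

lemma sum_list_cong': "(\<And>x. x \<in> set xs \<Longrightarrow> f x = g x) \<Longrightarrow> sum_list (map f xs) = sum_list (map g xs)"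
  by (metis map_cong)

lemma sum_list_add': "sum_list (map (\<lambda>x. f x + g x) xs) = sum_list (map f xs) + sum_list (map (g :: _ \<Rightarrow> 'b::comm_monoid_add) xs)"
  by (induction xs) (auto simp: algebra_simps)

lemma sum_list_diff': "sum_list (map (\<lambda>x. f x - g x) xs) = sum_list (map f xs) - sum_list (map (g :: _ \<Rightarrow> 'b::ab_group_add) xs)"
  by (induction xs) (auto simp: algebra_simps)

lemma sum_list_swap:
  fixes f :: "'d \<Rightarrow> 'c \<Rightarrow> 'b::comm_monoid_add"
  shows "sum_list (map (\<lambda>a. sum_list (map (\<lambda>b. f a b) ys)) xs)
   = sum_list (map (\<lambda>b. sum_list (map (\<lambda>a. f a b) xs)) ys)"
  by (induction xs) (auto simp: sum_list_add')

lemma bop_sum_list: "bounded_op (B::'a::chilbert \<Rightarrow> 'a) \<Longrightarrow> B (sum_list (map f xs)) = sum_list (map (\<lambda>x. B (f x)) xs)"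
  by (induction xs) (auto simp: bop_zero bop_add)

lemma sum_list_if_zero: "sum_list (map (\<lambda>x. if P x then f x else 0) xs) = sum_list (map f (filter P xs))"
  by (induction xs) auto

fun Ls :: "(nat \<Rightarrow> nat) \<Rightarrow> nat \<Rightarrow> (nat set \<times> (nat \<Rightarrow> nat)) list" where
  "Ls M 0 = [({}, \<lambda>_. 0)]"
| "Ls M (Suc j) = concat (map (\<lambda>(u,n). (u,n) # map (\<lambda>r. (insert (Suc j) u, n(Suc j := r))) [0..<Suc (M (Suc j))]) (Ls M j))"

lemma Ls_inv: "(u,n) \<in> set (Ls M j) \<Longrightarrow> u \<subseteq> {1..j} \<and> (\<forall>l. l \<notin> u \<longrightarrow> n l = 0) \<and> (\<forall>l. n l \<le> M l)"
proof (induction j arbitrary: u n)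
  case 0 thus ?case by simp
next
  case (Suc j)
  have "\<exists>p\<in>set (Ls M j). (u,n) \<in> set ((\<lambda>(u,n). (u,n) # map (\<lambda>r. (insert (Suc j) u, n(Suc j := r))) [0..<Suc (M (Suc j))]) p)"
    using Suc.prems by (simp del: upt_Suc)
  then obtain p where p1: "p \<in> set (Ls M j)"
    and p2: "(u,n) \<in> set ((\<lambda>(u,n). (u,n) # map (\<lambda>r. (insert (Suc j) u, n(Suc j := r))) [0..<Suc (M (Suc j))]) p)"
    by blast
  obtain u' n' where pe: "p = (u', n')" by (cases p)
  have un': "(u',n') \<in> set (Ls M j)" using p1 pe by simp
  have c0: "(u,n) \<in> set ((u',n') # map (\<lambda>r. (insert (Suc j) u', n'(Suc j := r))) [0..<Suc (M (Suc j))])"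
    using p2 pe by simp
  have c: "(u,n) = (u',n') \<or> (\<exists>r<Suc (M (Suc j)). (u,n) = (insert (Suc j) u', n'(Suc j := r)))"
    using c0 by (auto simp del: upt_Suc)
  from Suc.IH[OF un'] have ih: "u' \<subseteq> {1..j}" "\<forall>l. l \<notin> u' \<longrightarrow> n' l = 0" "\<forall>l. n' l \<le> M l" by auto
  from c show ?case
  proof
    assume "(u,n) = (u',n')" thus ?case using ih by auto
  next
    assume "\<exists>r<Suc (M (Suc j)). (u,n) = (insert (Suc j) u', n'(Suc j := r))"
    then obtain r where "r < Suc (M (Suc j))" "u = insert (Suc j) u'" "n = n'(Suc j := r)" by auto
    thus ?case using ih by auto
  qed
qed

lemma Ls_step: "sum_list (map f (Ls M (Suc j))) =
  sum_list (map (\<lambda>(u,n). f (u,n) + sum_list (map (\<lambda>r. f (insert (Suc j) u, n(Suc j := r))) [0..<Suc (M (Suc j))])) (Ls M j))"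
  by (simp add: sum_list_map_concat split_def o_def del: upt_Suc)

lemma telescope:
  fixes g :: "nat \<Rightarrow> 'b::ab_group_add"
  assumes "m \<le> Mx"
  shows "sum_list (map (\<lambda>r. if r \<le> m then g (m - r) - g (m - r + 1) else 0) [0..<Suc Mx]) = g 0 - g (m + 1)"
proof -
  have "sum_list (map (\<lambda>r. if r \<le> m then g (m - r) - g (m - r + 1) else 0) [0..<Suc Mx])
      = (\<Sum>r\<in>{0..<Suc Mx}. if r \<le> m then g (m - r) - g (m - r + 1) else 0)"
    by (simp add: sum_set_upt_conv_sum_list_nat[symmetric])
  also have "\<dots> = (\<Sum>r\<in>{0..m}. g (m - r) - g (m - r + 1))"
    using assms by (intro sum.mono_neutral_cong_right) auto
  also have "\<dots> = (\<Sum>p\<in>{0..m}. g p - g (p + 1))"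
    by (rule sum.reindex_bij_witness[of _ "\<lambda>p. m - p" "\<lambda>r. m - r"]) auto
  also have "\<dots> = - (\<Sum>p\<in>{0..m}. g (Suc p) - g p)"
    by (simp add: sum_negf[symmetric])
  also have "\<dots> = g 0 - g (m + 1)" by (subst sum_Suc_diff) auto
  finally show ?thesis .
qed

context qsys begin

definition Gj :: "nat \<Rightarrow> (nat \<Rightarrow> nat) \<Rightarrow> 'a \<Rightarrow> 'a" where
  "Gj j a x = adj (TF.Pn j a) (TF.Pn j a x)"

lemma Gj_0[simp]: "Gj 0 a x = x"
  by (simp add: Gj_def)

lemma Gj_cong: "(\<And>l. 1 \<le> l \<Longrightarrow> l \<le> j \<Longrightarrow> a l = b l) \<Longrightarrow> Gj j a = Gj j b"
proof -
  assume h: "\<And>l. 1 \<le> l \<Longrightarrow> l \<le> j \<Longrightarrow> a l = b l"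
  have "TF.Pn j a = TF.Pn j b" unfolding TF.Pn_def by (rule ordprod_cong) (simp add: h)
  thus ?thesis by (simp add: Gj_def[abs_def])
qed

lemma Gj_Suc:
  assumes "Suc j \<le> k"
  shows "Gj (Suc j) a x = adj (T (Suc j) ^^ a (Suc j)) (Gj j a ((T (Suc j) ^^ a (Suc j)) x))"
proof -
  have b1: "bounded_op (TF.Pn j a)" using assms by (intro TF.Pn_bnd) simp
  have b2: "bounded_op (T (Suc j) ^^ a (Suc j))" using assms by (intro TF.bnd_pow) auto
  have e: "TF.Pn (Suc j) a = TF.Pn j a \<circ> (T (Suc j) ^^ a (Suc j))"
    by (simp add: TF.Pn_def)
  show ?thesis unfolding Gj_def e adj_comp[OF b1 b2] by simp
qed

lemma Gj_bnd: "j \<le> k \<Longrightarrow> bounded_op (Gj j a)"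
proof -
  assume "j \<le> k"
  hence b: "bounded_op (TF.Pn j a)" by (intro TF.Pn_bnd)
  have "Gj j a = adj (TF.Pn j a) \<circ> TF.Pn j a" by (rule ext) (simp add: Gj_def)
  thus ?thesis using bounded_op_comp[OF bounded_op_adj[OF b] b] by simp
qed

definition Emat :: "(nat \<Rightarrow> nat) \<Rightarrow> nat set \<Rightarrow> (nat \<Rightarrow> nat) \<Rightarrow> nat set \<Rightarrow> nat \<Rightarrow> nat" where
  "Emat m u n v = (\<lambda>l. if l \<in> u then m l - n l + (if l \<in> v then 1 else 0) else m l + 1)"

definition Ff :: "nat \<Rightarrow> (nat \<Rightarrow> nat) \<Rightarrow> nat set \<Rightarrow> (nat \<Rightarrow> nat) \<Rightarrow> 'a \<Rightarrow> 'a" where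
  "Ff j m u n y = (if \<forall>l. n l \<le> m l then (\<Sum>v\<in>Pow u. scaleC ((-1) ^ card v) (Gj j (Emat m u n v) y)) else 0)"

lemma Pow_insert_sum:
  assumes "finite u" "c \<notin> u"
  shows "(\<Sum>v\<in>Pow (insert c u). f v) = (\<Sum>v\<in>Pow u. f v + f (insert c v))"
proof -
  have d: "Pow u \<inter> insert c ` Pow u = {}" using assms(2) by auto
  have i: "inj_on (insert c) (Pow u)" using assms(2) unfolding inj_on_def by (metis Diff_insert_absorb PowD in_mono)
  have "(\<Sum>v\<in>Pow (insert c u). f v) = (\<Sum>v\<in>Pow u \<union> insert c ` Pow u. f v)"
    by (simp add: Pow_insert)
  also have "\<dots> = (\<Sum>v\<in>Pow u. f v) + (\<Sum>v\<in>insert c ` Pow u. f v)"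
    using assms(1) d by (intro sum.union_disjoint) auto
  also have "(\<Sum>v\<in>insert c ` Pow u. f v) = (\<Sum>v\<in>Pow u. f (insert c v))"
    using i by (simp add: sum.reindex)
  finally show ?thesis by (simp add: sum.distrib)
qed

lemma core:
  assumes "j \<le> k" "\<And>l. m l \<le> M l"
  shows "sum_list (map (\<lambda>(u,n). Ff j m u n y) (Ls M j)) = y"
  using assms(1)
proof (induction j arbitrary: y)
  case 0 thus ?case by (simp add: Ff_def scaleC_one)
next
  case (Suc j)
  define c where "c = Suc j"
  define Tc where "Tc = (\<lambda>r. T c ^^ r)"
  have c1: "1 \<le> c" "c \<le> k" using Suc.prems by (auto simp: c_def)
  have Tcb: "bounded_op (Tc r)" for r unfolding Tc_def using c1 by (intro TF.bnd_pow) auto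
  have Tcab: "bounded_op (adj (Tc r))" for r by (rule bounded_op_adj[OF Tcb])
  have jk: "j \<le> k" using Suc.prems by simp
  have Gjb: "bounded_op (Gj j a)" for a using jk by (rule Gj_bnd)
  have GS: "Gj c a x = adj (Tc (a c)) (Gj j a (Tc (a c) x))" for a x
    unfolding c_def Tc_def using Suc.prems by (rule Gj_Suc)
  define g where "g = (\<lambda>p. adj (Tc p) (Tc p y))"
  have IH: "sum_list (map (\<lambda>(u,n). Ff j m u n z) (Ls M j)) = z" for z
    using Suc.IH jk by simp
  have Ffl: "Ff j m u n (scaleC a z) = scaleC a (Ff j m u n z)" for u n a z
    by (simp add: Ff_def scaleC_sum_right bop_scale[OF Gjb] scaleC_scaleC mult.commute)
  have FA: "Ff c m u n y = adj (Tc (m c + 1)) (Ff j m u n (Tc (m c + 1) y))"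
    if un: "(u,n) \<in> set (Ls M j)" for u n
  proof -
    have cu: "c \<notin> u" using Ls_inv[OF un] by (auto simp: c_def)
    have E: "Emat m u n v c = m c + 1" for v using cu by (simp add: Emat_def)
    show ?thesis
      by (simp add: Ff_def GS E bop_sum[OF Tcab] bop_scale[OF Tcab] bop_zero[OF Tcab])
  qed
  have FB: "Ff c m (insert c u) (n(c := r)) y = (if r \<le> m c then
        adj (Tc (m c - r)) (Ff j m u n (Tc (m c - r) y)) - adj (Tc (m c - r + 1)) (Ff j m u n (Tc (m c - r + 1) y))
      else 0)"
    if un: "(u,n) \<in> set (Ls M j)" for u n r
  proof -
    have inv: "u \<subseteq> {1..j}" "\<forall>l. l \<notin> u \<longrightarrow> n l = 0" using Ls_inv[OF un] by auto
    have cu: "c \<notin> u" using inv by (auto simp: c_def)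
    have nc: "n c = 0" using inv cu by auto
    have fu: "finite u" using inv(1) finite_subset[of u "{1..j}"] by simp
    have ind: "(\<forall>l. (n(c := r)) l \<le> m l) \<longleftrightarrow> r \<le> m c \<and> (\<forall>l. n l \<le> m l)"
    proof
      assume H: "\<forall>l. (n(c := r)) l \<le> m l"
      have "r \<le> m c" using H[rule_format, of c] by simp
      moreover have "n l \<le> m l" for l using H[rule_format, of l] nc by (cases "l = c") auto
      ultimately show "r \<le> m c \<and> (\<forall>l. n l \<le> m l)" by blast
    next
      assume "r \<le> m c \<and> (\<forall>l. n l \<le> m l)" thus "\<forall>l. (n(c := r)) l \<le> m l" by simp
    qed
    have cong: "Gj j (Emat m (insert c u) (n(c := r)) v) = Gj j (Emat m u n v)"
      if "v \<subseteq> u" for v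
      using cu by (intro Gj_cong) (auto simp: Emat_def c_def)
    have cong2: "Gj j (Emat m (insert c u) (n(c := r)) (insert c v)) = Gj j (Emat m u n v)"
      if "v \<subseteq> u" for v
      using cu by (intro Gj_cong) (auto simp: Emat_def c_def)
    have E1: "Emat m (insert c u) (n(c := r)) v c = m c - r" if "v \<subseteq> u" for v
      using that cu by (auto simp: Emat_def)
    have E2: "Emat m (insert c u) (n(c := r)) (insert c v) c = m c - r + 1" for v
      by (simp add: Emat_def)
    have cardi: "card (insert c v) = Suc (card v)" if "v \<subseteq> u" for v
    proof -
      have "finite v" using that fu finite_subset by blast
      moreover have "c \<notin> v" using that cu by blast
      ultimately show ?thesis by simp
    qed
    show ?thesis
    proof (cases "r \<le> m c \<and> (\<forall>l. n l \<le> m l)")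
      case False
      thus ?thesis using ind by (auto simp: Ff_def bop_zero[OF Tcab])
    next
      case True
      have "Ff c m (insert c u) (n(c := r)) y
          = (\<Sum>v\<in>Pow u. scaleC ((-1) ^ card v) (Gj c (Emat m (insert c u) (n(c := r)) v) y)
               + scaleC ((-1) ^ card (insert c v)) (Gj c (Emat m (insert c u) (n(c := r)) (insert c v)) y))"
        using True ind fu cu by (simp add: Ff_def Pow_insert_sum)
      also have "\<dots> = (\<Sum>v\<in>Pow u. adj (Tc (m c - r)) (scaleC ((-1) ^ card v) (Gj j (Emat m u n v) (Tc (m c - r) y)))
               - adj (Tc (m c - r + 1)) (scaleC ((-1) ^ card v) (Gj j (Emat m u n v) (Tc (m c - r + 1) y))))"
        by (rule sum.cong) (auto simp: GS E1 E2 cong cong2 cardi bop_scale[OF Tcab] scaleC_minus_left)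
      also have "\<dots> = adj (Tc (m c - r)) (Ff j m u n (Tc (m c - r) y)) - adj (Tc (m c - r + 1)) (Ff j m u n (Tc (m c - r + 1) y))"
        using True by (simp add: Ff_def sum_subtractf bop_sum[OF Tcab])
      finally show ?thesis using True by simp
    qed
  qed
  have "sum_list (map (\<lambda>(u,n). Ff (Suc j) m u n y) (Ls M (Suc j)))
     = sum_list (map (\<lambda>(u,n). Ff c m u n y + sum_list (map (\<lambda>r. Ff c m (insert c u) (n(c := r)) y) [0..<Suc (M c)])) (Ls M j))"
    unfolding Ls_step by (simp add: c_def case_prod_beta del: upt_Suc)
  also have "\<dots> = sum_list (map (\<lambda>(u,n). adj (Tc (m c + 1)) (Ff j m u n (Tc (m c + 1) y))
       + sum_list (map (\<lambda>r. if r \<le> m c then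
        adj (Tc (m c - r)) (Ff j m u n (Tc (m c - r) y)) - adj (Tc (m c - r + 1)) (Ff j m u n (Tc (m c - r + 1) y))
      else 0) [0..<Suc (M c)])) (Ls M j))"
    by (rule sum_list_cong') (auto simp: FA FB simp del: upt_Suc)
  also have "\<dots> = g (m c + 1) + sum_list (map (\<lambda>r. if r \<le> m c then g (m c - r) - g (m c - r + 1) else 0) [0..<Suc (M c)])"
  proof -
    have s1: "sum_list (map (\<lambda>(u,n). adj (Tc p) (Ff j m u n (Tc p y))) (Ls M j)) = g p" for p
    proof -
      have "sum_list (map (\<lambda>(u,n). adj (Tc p) (Ff j m u n (Tc p y))) (Ls M j))
          = adj (Tc p) (sum_list (map (\<lambda>(u,n). Ff j m u n (Tc p y)) (Ls M j)))"
        by (simp add: bop_sum_list[OF Tcab] split_def)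
      thus ?thesis by (simp add: IH g_def)
    qed
    have "sum_list (map (\<lambda>(u,n). sum_list (map (\<lambda>r. if r \<le> m c then
        adj (Tc (m c - r)) (Ff j m u n (Tc (m c - r) y)) - adj (Tc (m c - r + 1)) (Ff j m u n (Tc (m c - r + 1) y))
      else 0) [0..<Suc (M c)])) (Ls M j))
      = sum_list (map (\<lambda>r. sum_list (map (\<lambda>(u,n). if r \<le> m c then
        adj (Tc (m c - r)) (Ff j m u n (Tc (m c - r) y)) - adj (Tc (m c - r + 1)) (Ff j m u n (Tc (m c - r + 1) y))
      else 0) (Ls M j))) [0..<Suc (M c)])"
      using sum_list_swap[of "\<lambda>p r. if r \<le> m c then
        adj (Tc (m c - r)) (Ff j m (fst p) (snd p) (Tc (m c - r) y)) - adj (Tc (m c - r + 1)) (Ff j m (fst p) (snd p) (Tc (m c - r + 1) y))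
      else 0" "[0..<Suc (M c)]" "Ls M j"]
      by (simp add: split_def del: upt_Suc)
    also have "\<dots> = sum_list (map (\<lambda>r. if r \<le> m c then g (m c - r) - g (m c - r + 1) else 0) [0..<Suc (M c)])"
    proof (rule sum_list_cong')
      fix r
      show "sum_list (map (\<lambda>(u,n). if r \<le> m c then
        adj (Tc (m c - r)) (Ff j m u n (Tc (m c - r) y)) - adj (Tc (m c - r + 1)) (Ff j m u n (Tc (m c - r + 1) y))
        else 0) (Ls M j)) = (if r \<le> m c then g (m c - r) - g (m c - r + 1) else 0)"
      proof (cases "r \<le> m c")
        case True
        thus ?thesis using s1[of "m c - r"] s1[of "m c - r + 1"]
          by (simp add: sum_list_diff' split_def)
      next
        case False thus ?thesis by (simp add: split_def sum_list_zero')
      qed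
    qed
    finally have sw: "sum_list (map (\<lambda>(u,n). sum_list (map (\<lambda>r. if r \<le> m c then
        adj (Tc (m c - r)) (Ff j m u n (Tc (m c - r) y)) - adj (Tc (m c - r + 1)) (Ff j m u n (Tc (m c - r + 1) y))
      else 0) [0..<Suc (M c)])) (Ls M j)) = sum_list (map (\<lambda>r. if r \<le> m c then g (m c - r) - g (m c - r + 1) else 0) [0..<Suc (M c)])" .
    show ?thesis by (simp only: sum_list_add_split s1 sw)
  qed
  also have "\<dots> = g (m c + 1) + (g 0 - g (m c + 1))"
    using assms(2)[of c] by (simp only: telescope)
  also have "g 0 = y" by (simp add: g_def Tc_def)
  finally show ?case by simp
qed

end


context qsys begin

lemma Pn_zero: "TF.Pn n (\<lambda>l. 0) = id" "AF.Pn n (\<lambda>l. 0) = id"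
  by (induction n) (auto simp: TF.Pn_def AF.Pn_def)

lemma P_zero: "P (\<lambda>l. 0) = id" unfolding P_def by (rule Pn_zero)
lemma Ps_zero: "Ps (\<lambda>l. 0) = id" unfolding Ps_def by (rule Pn_zero)

lemma QQ_inv: "QQ (\<lambda>i j. - f i j) * QQ f = 1"
  by (simp only: QQ_mult) simp

lemma P_split: "P (\<lambda>l. c l + d l) x = scaleC (QQ (\<lambda>i j. int (d i) * int (c j))) (P c (P d x))"
proof -
  have "scaleC (QQ (\<lambda>i j. int (d i) * int (c j))) (P c (P d x))
      = scaleC (QQ (\<lambda>i j. int (d i) * int (c j)) * QQ (\<lambda>i j. - (int (d i) * int (c j)))) (P (\<lambda>l. c l + d l) x)"
    by (simp add: P_prod scaleC_scaleC)
  also have "QQ (\<lambda>i j. int (d i) * int (c j)) * QQ (\<lambda>i j. - (int (d i) * int (c j))) = 1"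
    using QQ_inv[of "\<lambda>i j. int (d i) * int (c j)"] by (simp add: mult.commute)
  finally show ?thesis by (simp add: scaleC_one)
qed

definition evf :: "nat set \<Rightarrow> nat \<Rightarrow> nat" where
  "evf v = (\<lambda>l. if l \<in> v \<and> 1 \<le> l \<and> l \<le> k then 1 else 0)"

lemma Tdc_e: "Tdc k q T (gdc_e k v) y = P (evf v) y"
proof -
  have p: "(\<lambda>l. pos_part (snd (gdc_e k v) l)) = evf v"
    by (rule ext) (simp add: gdc_e_def evf_def pos_part_def)
  have n: "(\<lambda>l. neg_part (snd (gdc_e k v) l)) = (\<lambda>l. 0)"
    by (rule ext) (simp add: gdc_e_def neg_part_def)
  have z: "(\<lambda>i j. - (int (pos_part (snd (gdc_e k v) i)) * int (neg_part (snd (gdc_e k v) j)))) = (\<lambda>i j. 0)"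
    by (intro ext) (simp add: gdc_e_def neg_part_def)
  have f: "fst (gdc_e k v) = (\<lambda>i j. 0)" by (simp add: gdc_e_def)
  show ?thesis unfolding Tdc_eq p n z f by (simp add: Ps_zero scaleC_one)
qed

lemma S_op_eq: "S_op k q T u y = (\<Sum>v\<in>Pow u. scaleC ((-1) ^ card v) (adj (P (evf v)) (P (evf v) y)))"
proof -
  have "Tdc k q T (gdc_e k v) = P (evf v)" for v by (rule ext) (rule Tdc_e)
  thus ?thesis by (simp add: S_op_def)
qed

definition av :: "(nat \<Rightarrow> int) \<Rightarrow> gdc_elem \<Rightarrow> nat \<Rightarrow> nat" where
  "av L s = (\<lambda>l. nat (snd s l - L l))"

definition ecf :: "nat set \<Rightarrow> nat \<Rightarrow> nat" where
  "ecf u = (\<lambda>l. if l \<in> u then 0 else 1)"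

definition Es :: "(nat \<Rightarrow> int) \<Rightarrow> nat set \<Rightarrow> (nat \<Rightarrow> nat) \<Rightarrow> gdc_elem \<Rightarrow> nat \<Rightarrow> nat" where
  "Es L u n s = (\<lambda>l. ecf u l + av L s l - n l)"

definition psi :: "(nat \<Rightarrow> int) \<Rightarrow> nat set \<Rightarrow> (nat \<Rightarrow> nat) \<Rightarrow> gdc_elem \<Rightarrow> complex" where
  "psi L u n s = QQ (fst s) * QQ (\<lambda>i j. int (av L s i) * (L j + int (n j) - int (ecf u j)))"

definition Yop :: "(nat \<Rightarrow> int) \<Rightarrow> nat set \<Rightarrow> (nat \<Rightarrow> nat) \<Rightarrow> gdc_elem \<Rightarrow> 'a \<Rightarrow> 'a" where
  "Yop L u n s = (if \<forall>l. n l \<le> av L s l then (\<lambda>x. scaleC (psi L u n s) (P (Es L u n s) x)) else (\<lambda>x. 0))"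

lemma Yop_bnd: "bounded_op (Yop L u n s)"
  unfolding Yop_def by (auto intro: bounded_op_scal P_bnd bounded_op_zero_op)

lemma adj_zero_op: "adj (\<lambda>x::'a. 0) = (\<lambda>x. 0)"
  by (rule adj_eqI[OF bounded_op_zero_op]) simp

lemma S_op_scale: "S_op k q T u (scaleC c y) = scaleC c (S_op k q T u y)"
  by (simp add: S_op_eq bop_scale[OF P_bnd] bop_scale[OF bounded_op_adj[OF P_bnd]] scaleC_sum_right scaleC_scaleC mult.commute)

lemma S_op_zero: "S_op k q T u 0 = 0"
  using S_op_scale[of u 0 0] by simp

lemma S_op_add: "S_op k q T u (y + z) = S_op k q T u y + S_op k q T u z"
  by (simp add: S_op_eq bop_add[OF P_bnd] bop_add[OF bounded_op_adj[OF P_bnd]] scaleC_add_right sum.distrib)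

lemma S_op_bnd: "bounded_op (S_op k q T u)"
proof -
  have "S_op k q T u = (\<lambda>y. \<Sum>v\<in>Pow u. scaleC ((-1) ^ card v) ((adj (P (evf v)) \<circ> P (evf v)) y))"
    by (rule ext) (simp add: S_op_eq)
  moreover have "bounded_op (\<lambda>y. \<Sum>v\<in>V. scaleC ((-1) ^ card v) ((adj (P (evf v)) \<circ> P (evf v)) y))" for V
  proof (induction V rule: infinite_finite_induct)
    case (infinite A) thus ?case by (simp add: bounded_op_zero_op)
  next
    case empty thus ?case by (simp add: bounded_op_zero_op)
  next
    case (insert v F)
    have b1: "bounded_op (\<lambda>y. scaleC ((-1) ^ card v) ((adj (P (evf v)) \<circ> P (evf v)) y))"
      by (intro bounded_op_scal bounded_op_comp bounded_op_adj P_bnd)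
    obtain K1 where K1: "\<And>x. cnorm (scaleC ((-1) ^ card v) ((adj (P (evf v)) \<circ> P (evf v)) x)) \<le> K1 * cnorm x"
      using bop_bound[OF b1] by blast
    obtain K2 where K2: "\<And>x. cnorm (\<Sum>v\<in>F. scaleC ((-1) ^ card v) ((adj (P (evf v)) \<circ> P (evf v)) x)) \<le> K2 * cnorm x"
      using bop_bound[OF insert.IH] by blast
    have "cnorm (\<Sum>v\<in>insert v F. scaleC ((-1) ^ card v) ((adj (P (evf v)) \<circ> P (evf v)) x)) \<le> (K1 + K2) * cnorm x" for x
      using insert.hyps cnorm_triangle[of "scaleC ((-1) ^ card v) ((adj (P (evf v)) \<circ> P (evf v)) x)"
          "\<Sum>v\<in>F. scaleC ((-1) ^ card v) ((adj (P (evf v)) \<circ> P (evf v)) x)"] K1[of x] K2[of x]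
      by (simp add: algebra_simps)
    moreover have "(\<Sum>v\<in>insert v F. scaleC ((-1) ^ card v) ((adj (P (evf v)) \<circ> P (evf v)) (x + y)))
       = (\<Sum>v\<in>insert v F. scaleC ((-1) ^ card v) ((adj (P (evf v)) \<circ> P (evf v)) x))
       + (\<Sum>v\<in>insert v F. scaleC ((-1) ^ card v) ((adj (P (evf v)) \<circ> P (evf v)) y))" for x y
      by (simp add: bop_add[OF P_bnd] bop_add[OF bounded_op_adj[OF P_bnd]] scaleC_add_right sum.distrib)
    moreover have "(\<Sum>v\<in>insert v F. scaleC ((-1) ^ card v) ((adj (P (evf v)) \<circ> P (evf v)) (scaleC c x)))
       = scaleC c (\<Sum>v\<in>insert v F. scaleC ((-1) ^ card v) ((adj (P (evf v)) \<circ> P (evf v)) x))" for c x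
      by (simp add: bop_scale[OF P_bnd] bop_scale[OF bounded_op_adj[OF P_bnd]] scaleC_sum_right scaleC_scaleC mult.commute)
    ultimately show ?case unfolding bounded_op_def by blast
  qed
  ultimately show ?thesis by simp
qed

lemma Pprod_split:
  assumes "\<And>l. e l + f l = c l + d l"
  shows "P e (P f x) = scaleC (QQ (\<lambda>i j. - (int (f i) * int (e j))) * QQ (\<lambda>i j. int (d i) * int (c j))) (P c (P d x))"
proof -
  have ef: "(\<lambda>l. e l + f l) = (\<lambda>l. c l + d l)" using assms by auto
  have "P e (P f x) = scaleC (QQ (\<lambda>i j. - (int (f i) * int (e j)))) (P (\<lambda>l. e l + f l) x)"
    by (rule P_prod)
  also have "\<dots> = scaleC (QQ (\<lambda>i j. - (int (f i) * int (e j)))) (P (\<lambda>l. c l + d l) x)"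
    by (simp only: ef)
  also have "P (\<lambda>l. c l + d l) x = scaleC (QQ (\<lambda>i j. int (d i) * int (c j))) (P c (P d x))"
    by (rule P_split)
  finally show ?thesis by (simp add: scaleC_scaleC)
qed

lemma adj_P_eq: "adj (P a) = (\<lambda>x. scaleC (QQ (\<lambda>i j. - (int (a i) * int (a j)))) (Ps a x))"
  by (rule ext) (rule adj_P)

lemma adj_pair:
  assumes "\<And>w. P e (P f w) = scaleC d (P c (P g w))"
  shows "adj (P f) (adj (P e) z) = scaleC (cnj d) (adj (P g) (adj (P c) z))"
proof -
  have "adj (P f) (adj (P e) z) = adj (P e \<circ> P f) z"
    by (simp add: adj_comp[OF P_bnd P_bnd])
  also have "P e \<circ> P f = (\<lambda>w. scaleC d ((P c \<circ> P g) w))"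
    by (rule ext) (simp add: assms)
  also have "adj \<dots> = (\<lambda>w. scaleC (cnj d) (adj (P c \<circ> P g) w))"
    by (rule adj_scal[OF bounded_op_comp[OF P_bnd P_bnd]])
  finally show ?thesis by (simp add: adj_comp[OF P_bnd P_bnd])
qed

lemma Gj_k: "Gj k a y = adj (P a) (P a y)"
  by (simp add: Gj_def P_def)

lemma term_lemma:
  fixes L :: "nat \<Rightarrow> int" and s t :: gdc_elem
  defines "a \<equiv> av L s" and "b \<equiv> av L t"
  defines "m \<equiv> (\<lambda>l. min (a l) (b l))" and "\<alpha> \<equiv> (\<lambda>l. a l - b l)" and "\<beta> \<equiv> (\<lambda>l. b l - a l)"
  defines "W \<equiv> QQ (fst (gdc_mult k (gdc_inv k t) s)) * QQ (\<lambda>i j. - (int (\<alpha> i) * int (\<beta> j)))"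
  assumes Ls: "\<And>l. L l \<le> snd s l" "\<And>l. L l \<le> snd t l"
    and un: "u \<subseteq> {1..k}" "\<And>l. l \<notin> u \<Longrightarrow> n l = 0"
  shows "adj (Yop L u n t) (S_op k q T u (Yop L u n s x)) = scaleC W (Ps \<beta> (Ff k m u n (P \<alpha> x)))"
proof (cases "\<forall>l. n l \<le> m l")
  case False
  have rhs: "Ff k m u n (P \<alpha> x) = 0" unfolding Ff_def using False by (simp only: if_not_P[OF False] if_False)
  show ?thesis
  proof (cases "\<forall>l. n l \<le> a l")
    case True
    hence "\<not> (\<forall>l. n l \<le> b l)" using False by (auto simp: m_def)
    hence "Yop L u n t = (\<lambda>x. 0)" by (auto simp: Yop_def b_def)
    thus ?thesis by (simp add: adj_zero_op rhs bop_zero[OF Ps_bnd])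
  next
    case False
    hence "Yop L u n s = (\<lambda>x. 0)" by (auto simp: Yop_def a_def)
    thus ?thesis by (simp add: rhs S_op_zero bop_zero[OF bounded_op_adj[OF Yop_bnd]] bop_zero[OF Ps_bnd])
  qed
next
  case True
  have na: "n l \<le> a l" and nb: "n l \<le> b l" for l using True[rule_format, of l] by (auto simp: m_def)
  define Esf where "Esf = Es L u n s"
  define Etf where "Etf = Es L u n t"
  have Ys: "Yop L u n s x = scaleC (psi L u n s) (P Esf x)"
    using na by (simp add: Yop_def a_def Esf_def)
  have Yt: "Yop L u n t = (\<lambda>x. scaleC (psi L u n t) (P Etf x))"
    using nb by (simp add: Yop_def b_def Etf_def)
  have adjYt: "adj (Yop L u n t) z = scaleC (cnj (psi L u n t)) (adj (P Etf) z)" for z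
    unfolding Yt by (simp add: adj_scal[OF P_bnd])
  define cc where "cc = (\<lambda>v. Emat m u n v)"
  define ds where "ds = (\<lambda>v. QQ (\<lambda>i j. - (int (Esf i) * int (evf v j))) * QQ (\<lambda>i j. int (\<alpha> i) * int (cc v j)))"
  define dt where "dt = (\<lambda>v. QQ (\<lambda>i j. - (int (Etf i) * int (evf v j))) * QQ (\<lambda>i j. int (\<beta> i) * int (cc v j)))"
  have ev_u: "evf v l = 0" if "v \<subseteq> u" "l \<notin> u" for v l using that by (auto simp: evf_def)
  have ev_in: "evf v l = (if l \<in> v then 1 else 0)" if "v \<subseteq> u" "l \<in> u" for v l
    using that un(1) by (auto simp: evf_def)
  have sumS: "evf v l + Esf l = cc v l + \<alpha> l" if "v \<subseteq> u" for v l
  proof (cases "l \<in> u")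
    case True thus ?thesis using that na[of l] nb[of l] ev_in[OF that True]
      by (auto simp: Esf_def Es_def ecf_def cc_def Emat_def m_def \<alpha>_def a_def[symmetric])
  next
    case False thus ?thesis using that ev_u[OF that False] un(2)[OF False]
      by (auto simp: Esf_def Es_def ecf_def cc_def Emat_def m_def \<alpha>_def a_def[symmetric])
  qed
  have sumT: "evf v l + Etf l = cc v l + \<beta> l" if "v \<subseteq> u" for v l
  proof (cases "l \<in> u")
    case True thus ?thesis using that na[of l] nb[of l] ev_in[OF that True]
      by (auto simp: Etf_def Es_def ecf_def cc_def Emat_def m_def \<beta>_def b_def[symmetric])
  next
    case False thus ?thesis using that ev_u[OF that False] un(2)[OF False]
      by (auto simp: Etf_def Es_def ecf_def cc_def Emat_def m_def \<beta>_def b_def[symmetric])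
  qed
  have PS: "P (evf v) (P Esf w) = scaleC (ds v) (P (cc v) (P \<alpha> w))" if "v \<subseteq> u" for v w
    unfolding ds_def by (rule Pprod_split) (rule sumS[OF that])
  have PT: "P (evf v) (P Etf w) = scaleC (dt v) (P (cc v) (P \<beta> w))" if "v \<subseteq> u" for v w
    unfolding dt_def by (rule Pprod_split) (rule sumT[OF that])
  have scal: "cnj (psi L u n t) * psi L u n s * cnj (dt v) * ds v * QQ (\<lambda>i j. - (int (\<beta> i) * int (\<beta> j))) = W"
    if vu: "v \<subseteq> u" for v
  proof -
    have fa: "int (a l) = int (m l) + int (\<alpha> l)" for l by (simp add: m_def \<alpha>_def)
    have fb: "int (b l) = int (m l) + int (\<beta> l)" for l by (simp add: m_def \<beta>_def)
    have fs: "snd s l = L l + int (a l)" for l using Ls(1)[of l] by (simp add: a_def av_def)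
    have ft: "snd t l = L l + int (b l)" for l using Ls(2)[of l] by (simp add: b_def av_def)
    have fEs: "int (Esf l) = int (ecf u l) + int (a l) - int (n l)" for l
      using na[of l] by (simp add: Esf_def Es_def a_def of_nat_diff)
    have fEt: "int (Etf l) = int (ecf u l) + int (b l) - int (n l)" for l
      using nb[of l] by (simp add: Etf_def Es_def b_def of_nat_diff)
    have fcc: "int (cc v l) = int (evf v l) + int (ecf u l) + int (m l) - int (n l)" for l
    proof (cases "l \<in> u")
      case True
      have "n l \<le> m l" using na[of l] nb[of l] by (simp add: m_def)
      thus ?thesis using True ev_in[OF vu True] by (simp add: cc_def Emat_def ecf_def of_nat_diff)
    next
      case False
      thus ?thesis using ev_u[OF vu False] un(2)[OF False] by (simp add: cc_def Emat_def ecf_def)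
    qed
    show ?thesis
      unfolding psi_def dt_def ds_def W_def a_def[symmetric] b_def[symmetric] complex_cnj_mult QQ_cnj
      unfolding mult.assoc QQ_mult
      by (rule QQ_cong) (simp add: gdc_mult_fst gdc_inv_fst gdc_inv_snd fs ft fEs fEt fcc fa fb algebra_simps)
  qed
  have "adj (Yop L u n t) (S_op k q T u (Yop L u n s x))
     = (\<Sum>v\<in>Pow u. scaleC ((-1) ^ card v) (scaleC (cnj (psi L u n t) * psi L u n s)
          (adj (P Etf) (adj (P (evf v)) (P (evf v) (P Esf x))))))"
    by (simp add: adjYt Ys S_op_scale S_op_eq bop_sum[OF bounded_op_adj[OF P_bnd]] bop_scale[OF P_bnd]
        bop_scale[OF bounded_op_adj[OF P_bnd]] scaleC_sum_right scaleC_scaleC mult.commute mult.left_commute)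
  also have "\<dots> = (\<Sum>v\<in>Pow u. scaleC ((-1) ^ card v) (scaleC W (Ps \<beta> (Gj k (cc v) (P \<alpha> x)))))"
  proof (rule sum.cong)
    fix v assume v: "v \<in> Pow u"
    hence vu: "v \<subseteq> u" by simp
    have e1: "adj (P Etf) (adj (P (evf v)) (P (evf v) (P Esf x)))
        = scaleC (cnj (dt v)) (adj (P \<beta>) (adj (P (cc v)) (P (evf v) (P Esf x))))"
      by (rule adj_pair) (rule PT[OF vu])
    have e2: "adj (P (cc v)) (P (evf v) (P Esf x)) = scaleC (ds v) (Gj k (cc v) (P \<alpha> x))"
      by (simp only: PS[OF vu] bop_scale[OF bounded_op_adj[OF P_bnd]] Gj_k)
    have e3: "adj (P \<beta>) (scaleC (ds v) w) = scaleC (ds v * QQ (\<lambda>i j. - (int (\<beta> i) * int (\<beta> j)))) (Ps \<beta> w)" for w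
      by (simp add: adj_P bop_scale[OF Ps_bnd] scaleC_scaleC mult.commute)
    have "adj (P Etf) (adj (P (evf v)) (P (evf v) (P Esf x)))
       = scaleC (cnj (dt v) * ds v * QQ (\<lambda>i j. - (int (\<beta> i) * int (\<beta> j)))) (Ps \<beta> (Gj k (cc v) (P \<alpha> x)))"
      unfolding e1 e2 e3 by (simp add: scaleC_scaleC mult.assoc)
    thus "scaleC ((-1) ^ card v) (scaleC (cnj (psi L u n t) * psi L u n s)
          (adj (P Etf) (adj (P (evf v)) (P (evf v) (P Esf x))))) =
        scaleC ((-1) ^ card v) (scaleC W (Ps \<beta> (Gj k (cc v) (P \<alpha> x))))"
      using scal[OF vu] PS[OF vu] by (simp add: scaleC_scaleC mult.assoc)
  qed simp
  also have "\<dots> = scaleC W (Ps \<beta> (Ff k m u n (P \<alpha> x)))"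
    using True by (simp add: Ff_def cc_def bop_sum[OF Ps_bnd] bop_scale[OF Ps_bnd] scaleC_sum_right scaleC_scaleC mult.commute)
  finally show ?thesis .
qed

end


lemma pos_part_diff: "pos_part (int x - int y) = x - y"
  by (simp add: pos_part_def)

lemma neg_part_diff: "neg_part (int x - int y) = y - x"
  by (simp add: neg_part_def)

lemma cnonneg_add: "cnonneg a \<Longrightarrow> cnonneg b \<Longrightarrow> cnonneg (a + b)"
  by (simp add: cnonneg_def)

lemma cnonneg_sum_list: "(\<And>x. x \<in> set xs \<Longrightarrow> cnonneg (f x)) \<Longrightarrow> cnonneg (sum_list (map f xs))"
  by (induction xs) (auto simp: cnonneg_add cnonneg_def)

lemma cinner_sum_list_left: "cinner (sum_list (map f xs)) (y::'a::chilbert) = sum_list (map (\<lambda>x. cinner (f x) y) xs)"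
  by (induction xs) (auto simp: cinner_add_left)

lemma scaleC_sum_list: "scaleC c (sum_list (map f xs)) = sum_list (map (\<lambda>x. scaleC c (f x :: 'a::chilbert)) xs)"
  by (induction xs) (auto simp: scaleC_add_right)

lemma cinner_sum_sum: "cinner (\<Sum>s\<in>F. a s) (\<Sum>t\<in>G. b t) = (\<Sum>s\<in>F. \<Sum>t\<in>G. cinner (a s) (b t :: 'a::chilbert))"
  by (simp add: cinner_sum_left cinner_sum_right) (rule sum.swap)

lemma sum_sum_list_swap2: "(\<Sum>s\<in>F. \<Sum>t\<in>G. sum_list (map (\<lambda>p. g p s t) xs)) = sum_list (map (\<lambda>p. \<Sum>s\<in>F. \<Sum>t\<in>G. g p s t) xs)"
  by (induction xs) (auto simp: sum.distrib)

lemma sum_sum_list_swap: "(\<Sum>s\<in>F. sum_list (map (f s) xs)) = sum_list (map (\<lambda>x. \<Sum>s\<in>F. f s x) xs)"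
  by (induction xs) (auto simp: sum.distrib)

context qsys begin

lemma kernel_ident:
  assumes t: "t \<in> carrier (Gdc k)"
    and Ls: "\<And>l. L l \<le> snd s l" "\<And>l. L l \<le> snd t l"
    and Ms: "\<And>l. av L s l \<le> M l" "\<And>l. av L t l \<le> M l"
  shows "sum_list (map (\<lambda>(u,n). adj (Yop L u n t) (S_op k q T u (Yop L u n s x))) (Ls M k))
       = Tdc k q T (inv\<^bsub>Gdc k\<^esub> t \<otimes>\<^bsub>Gdc k\<^esub> s) x"
proof -
  define a where "a = av L s"
  define b where "b = av L t"
  define m where "m = (\<lambda>l. min (a l) (b l))"
  define \<alpha> where "\<alpha> = (\<lambda>l. a l - b l)"
  define \<beta> where "\<beta> = (\<lambda>l. b l - a l)"
  define W where "W = QQ (fst (gdc_mult k (gdc_inv k t) s)) * QQ (\<lambda>i j. - (int (\<alpha> i) * int (\<beta> j)))"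
  have "sum_list (map (\<lambda>(u,n). adj (Yop L u n t) (S_op k q T u (Yop L u n s x))) (Ls M k))
      = sum_list (map (\<lambda>(u,n). scaleC W (Ps \<beta> (Ff k m u n (P \<alpha> x)))) (Ls M k))"
  proof (rule sum_list_cong')
    fix p assume p: "p \<in> set (Ls M k)"
    obtain u n where pe: "p = (u,n)" by (cases p)
    have inv: "u \<subseteq> {1..k}" "\<And>l. l \<notin> u \<Longrightarrow> n l = 0" using Ls_inv[of u n M k] p pe by auto
    show "(case p of (u,n) \<Rightarrow> adj (Yop L u n t) (S_op k q T u (Yop L u n s x)))
        = (case p of (u,n) \<Rightarrow> scaleC W (Ps \<beta> (Ff k m u n (P \<alpha> x))))"
      unfolding pe using term_lemma[OF Ls inv, where x=x]
      by (simp add: W_def a_def b_def m_def \<alpha>_def \<beta>_def)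
  qed
  also have "\<dots> = scaleC W (Ps \<beta> (sum_list (map (\<lambda>(u,n). Ff k m u n (P \<alpha> x)) (Ls M k))))"
    by (simp add: bop_sum_list[OF Ps_bnd] scaleC_sum_list split_def)
  also have "sum_list (map (\<lambda>(u,n). Ff k m u n (P \<alpha> x)) (Ls M k)) = P \<alpha> x"
    by (rule core) (use Ms in \<open>auto simp: m_def a_def b_def intro: le_trans[OF min.cobounded1]\<close>)
  finally have lhs: "sum_list (map (\<lambda>(u,n). adj (Yop L u n t) (S_op k q T u (Yop L u n s x))) (Ls M k))
      = scaleC W (Ps \<beta> (P \<alpha> x))" .
  have sd: "snd (gdc_mult k (gdc_inv k t) s) l = int (a l) - int (b l)" for l
    using Ls[of l] by (simp add: gdc_mult_snd gdc_inv_snd a_def b_def av_def)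
  have pp: "(\<lambda>l. pos_part (snd (gdc_mult k (gdc_inv k t) s) l)) = \<alpha>"
    by (rule ext) (simp add: sd pos_part_diff \<alpha>_def)
  have np: "(\<lambda>l. neg_part (snd (gdc_mult k (gdc_inv k t) s) l)) = \<beta>"
    by (rule ext) (simp add: sd neg_part_diff \<beta>_def)
  have np2: "(\<lambda>i j. - (int (pos_part (snd (gdc_mult k (gdc_inv k t) s) i)) * int (neg_part (snd (gdc_mult k (gdc_inv k t) s) j))))
     = (\<lambda>i j. - (int (\<alpha> i) * int (\<beta> j)))"
    by (intro ext) (simp add: sd pos_part_diff neg_part_diff \<alpha>_def \<beta>_def)
  have "Tdc k q T (inv\<^bsub>Gdc k\<^esub> t \<otimes>\<^bsub>Gdc k\<^esub> s) x = Tdc k q T (gdc_mult k (gdc_inv k t) s) x"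
    by (simp add: Gdc_inv[OF t])
  also have "\<dots> = scaleC W (Ps \<beta> (P \<alpha> x))"
    unfolding Tdc_eq pp np np2 W_def ..
  finally show ?thesis using lhs by simp
qed

lemma pd_sum:
  assumes Spos: "\<And>u. u \<subseteq> {1..k} \<Longrightarrow> positive_op (S_op k q T u)"
    and F: "finite F" "F \<subseteq> carrier (Gdc k)"
  shows "cnonneg (\<Sum>s\<in>F. \<Sum>t\<in>F. cinner (Tdc k q T (inv\<^bsub>Gdc k\<^esub> t \<otimes>\<^bsub>Gdc k\<^esub> s) (h s)) (h t))"
proof (cases "F = {}")
  case True thus ?thesis by (simp add: cnonneg_def)
next
  case False
  define L where "L = (\<lambda>l. Min ((\<lambda>s. snd s l) ` F))"
  have Lle: "L l \<le> snd s l" if "s \<in> F" for s l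
    unfolding L_def using F(1) that by (intro Min_le) auto
  define M where "M = (\<lambda>l. Max ((\<lambda>s. av L s l) ` F))"
  have Mle: "av L s l \<le> M l" if "s \<in> F" for s l
    unfolding M_def using F(1) that by (intro Max_ge) auto
  define Z where "Z = (\<lambda>u n. \<Sum>s\<in>F. Yop L u n s (h s))"
  have trm: "cinner (Tdc k q T (inv\<^bsub>Gdc k\<^esub> t \<otimes>\<^bsub>Gdc k\<^esub> s) (h s)) (h t)
      = sum_list (map (\<lambda>(u,n). cinner (S_op k q T u (Yop L u n s (h s))) (Yop L u n t (h t))) (Ls M k))"
    if st: "s \<in> F" "t \<in> F" for s t
  proof -
    have tc: "t \<in> carrier (Gdc k)" using st F(2) by auto
    have "Tdc k q T (inv\<^bsub>Gdc k\<^esub> t \<otimes>\<^bsub>Gdc k\<^esub> s) (h s)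
        = sum_list (map (\<lambda>(u,n). adj (Yop L u n t) (S_op k q T u (Yop L u n s (h s)))) (Ls M k))"
      by (rule kernel_ident[symmetric]) (use tc Lle Mle st in auto)
    thus ?thesis by (simp add: cinner_sum_list_left split_def adj_left[OF Yop_bnd])
  qed
  have "(\<Sum>s\<in>F. \<Sum>t\<in>F. cinner (Tdc k q T (inv\<^bsub>Gdc k\<^esub> t \<otimes>\<^bsub>Gdc k\<^esub> s) (h s)) (h t))
      = (\<Sum>s\<in>F. \<Sum>t\<in>F. sum_list (map (\<lambda>(u,n). cinner (S_op k q T u (Yop L u n s (h s))) (Yop L u n t (h t))) (Ls M k)))"
    by (intro sum.cong refl, rule trm, assumption+)
  also have "\<dots> = sum_list (map (\<lambda>(u,n). \<Sum>s\<in>F. \<Sum>t\<in>F. cinner (S_op k q T u (Yop L u n s (h s))) (Yop L u n t (h t))) (Ls M k))"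
    unfolding split_def by (rule sum_sum_list_swap2)
  also have "\<dots> = sum_list (map (\<lambda>(u,n). cinner (S_op k q T u (Z u n)) (Z u n)) (Ls M k))"
    by (simp only: Z_def bop_sum[OF S_op_bnd] cinner_sum_sum split_def)
  finally have eq: "(\<Sum>s\<in>F. \<Sum>t\<in>F. cinner (Tdc k q T (inv\<^bsub>Gdc k\<^esub> t \<otimes>\<^bsub>Gdc k\<^esub> s) (h s)) (h t))
     = sum_list (map (\<lambda>(u,n). cinner (S_op k q T u (Z u n)) (Z u n)) (Ls M k))" .
  show ?thesis unfolding eq
  proof (rule cnonneg_sum_list)
    fix p assume p: "p \<in> set (Ls M k)"
    obtain u n where pe: "p = (u,n)" by (cases p)
    have "u \<subseteq> {1..k}" using Ls_inv[of u n M k] p pe by auto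
    hence "positive_op (S_op k q T u)" by (rule Spos)
    thus "cnonneg (case p of (u,n) \<Rightarrow> cinner (S_op k q T u (Z u n)) (Z u n))"
      unfolding pe positive_op_def by simp
  qed
qed

end


lemma Pow_insert_sum2:
  assumes "finite u" "c \<notin> u"
  shows "(\<Sum>v\<in>Pow (insert c u). f v) = (\<Sum>v\<in>Pow u. f v + f (insert c v))"
proof -
  have d: "Pow u \<inter> insert c ` Pow u = {}" using assms(2) by auto
  have i: "inj_on (insert c) (Pow u)" using assms(2) unfolding inj_on_def by (metis Diff_insert_absorb PowD in_mono)
  have "(\<Sum>v\<in>Pow (insert c u). f v) = (\<Sum>v\<in>Pow u \<union> insert c ` Pow u. f v)"
    by (simp add: Pow_insert)
  also have "\<dots> = (\<Sum>v\<in>Pow u. f v) + (\<Sum>v\<in>insert c ` Pow u. f v)"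
    using assms(1) d by (intro sum.union_disjoint) auto
  also have "(\<Sum>v\<in>insert c ` Pow u. f v) = (\<Sum>v\<in>Pow u. f (insert c v))"
    using i by (simp add: sum.reindex)
  finally show ?thesis by (simp add: sum.distrib)
qed

lemma comb_ident:
  fixes f :: "nat set \<Rightarrow> 'b::comm_ring_1"
  assumes "finite u"
  shows "(\<Sum>v\<in>Pow u. \<Sum>w\<in>Pow u. (-1) ^ (card v + card w) * f (v \<union> w)) = (\<Sum>r\<in>Pow u. (-1) ^ card r * f r)"
  using assms
proof (induction u arbitrary: f rule: finite_induct)
  case empty thus ?case by simp
next
  case (insert x u)
  have fin: "finite v" if "v \<in> Pow u" for v using that insert.hyps(1) finite_subset by blast
  have xn: "x \<notin> v" if "v \<in> Pow u" for v using that insert.hyps(2) by blast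
  have cins: "card (insert x v) = Suc (card v)" if "v \<in> Pow u" for v using fin[OF that] xn[OF that] by simp
  define g where "g = (\<lambda>r. f r - f (insert x r))"
  define G where "G = (\<lambda>v w. (-1) ^ (card v + card w) * f (v \<union> w))"
  have pt: "G v w + G v (insert x w) + (G (insert x v) w + G (insert x v) (insert x w))
      = (-1) ^ (card v + card w) * g (v \<union> w)" if "v \<in> Pow u" "w \<in> Pow u" for v w
    using cins[OF that(1)] cins[OF that(2)] by (simp add: G_def g_def algebra_simps)
  have "(\<Sum>v\<in>Pow (insert x u). \<Sum>w\<in>Pow (insert x u). (-1) ^ (card v + card w) * f (v \<union> w))
      = (\<Sum>v\<in>Pow (insert x u). \<Sum>w\<in>Pow (insert x u). G v w)" by (simp add: G_def)
  also have "\<dots> = (\<Sum>v\<in>Pow u. (\<Sum>w\<in>Pow u. G v w + G v (insert x w)) + (\<Sum>w\<in>Pow u. G (insert x v) w + G (insert x v) (insert x w)))"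
    using insert.hyps by (simp add: Pow_insert_sum2)
  also have "\<dots> = (\<Sum>v\<in>Pow u. \<Sum>w\<in>Pow u. (-1) ^ (card v + card w) * g (v \<union> w))"
    by (rule sum.cong[OF refl]) (simp add: sum.distrib[symmetric] pt)
  also have "\<dots> = (\<Sum>r\<in>Pow u. (-1) ^ card r * g r)" by (rule insert.IH)
  also have "\<dots> = (\<Sum>r\<in>Pow (insert x u). (-1) ^ card r * f r)"
  proof -
    have "(\<Sum>r\<in>Pow (insert x u). (-1) ^ card r * f r) = (\<Sum>r\<in>Pow u. (-1) ^ card r * f r + (-1) ^ card (insert x r) * f (insert x r))"
      using insert.hyps by (simp add: Pow_insert_sum2)
    also have "\<dots> = (\<Sum>r\<in>Pow u. (-1) ^ card r * g r)"
      by (rule sum.cong[OF refl]) (simp add: cins g_def algebra_simps)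
    finally show ?thesis by simp
  qed
  finally show ?case .
qed

context qsys begin

definition sv :: "nat set \<Rightarrow> gdc_elem" where
  "sv v = ((\<lambda>i j. 0), (\<lambda>l. - int (evf v l)))"

definition lam :: "nat set \<Rightarrow> complex" where
  "lam v = QQ (\<lambda>i j. - (int (evf v i) * int (evf v j)))"

lemma evf_union: "evf v l + (evf w l - evf v l) = evf (v \<union> w) l"
  by (simp add: evf_def)

lemma evf_union2: "evf w l + (evf v l - evf w l) = evf (v \<union> w) l"
  by (simp add: evf_def)

lemma term2:
  "cinner (Tdc k q T (gdc_mult k (gdc_inv k (sv w)) (sv v)) (scaleC ((-1) ^ card v * lam v) (P (evf v) g)))
          (scaleC ((-1) ^ card w * lam w) (P (evf w) g))
   = (-1) ^ (card v + card w) * cinner (P (evf (v \<union> w)) g) (P (evf (v \<union> w)) g)"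
proof -
  define x where "x = evf v"
  define y where "y = evf w"
  define A where "A = (\<lambda>l. y l - x l)"
  define B where "B = (\<lambda>l. x l - y l)"
  define e where "e = evf (v \<union> w)"
  define z where "z = gdc_mult k (gdc_inv k (sv w)) (sv v)"
  have sz: "snd z l = int (y l) - int (x l)" for l
    by (simp add: z_def gdc_mult_snd gdc_inv_snd sv_def x_def y_def)
  have pz: "(\<lambda>l. pos_part (snd z l)) = A" by (rule ext) (simp add: sz pos_part_diff A_def)
  have nz: "(\<lambda>l. neg_part (snd z l)) = B" by (rule ext) (simp add: sz neg_part_diff B_def)
  have nz2: "(\<lambda>i j. - (int (pos_part (snd z i)) * int (neg_part (snd z j)))) = (\<lambda>i j. - (int (A i) * int (B j)))"
    by (intro ext) (simp add: sz pos_part_diff neg_part_diff A_def B_def)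
  define c where "c = QQ (fst z) * QQ (\<lambda>i j. - (int (A i) * int (B j)))"
  have Tz: "Tdc k q T z u' = scaleC c (Ps B (P A u'))" for u'
    unfolding Tdc_eq pz nz nz2 c_def ..
  have PA: "P A (P x g) = scaleC (QQ (\<lambda>i j. - (int (x i) * int (A j)))) (P e g)"
  proof -
    have "(\<lambda>l. A l + x l) = e" by (rule ext) (simp add: A_def x_def y_def e_def evf_def)
    thus ?thesis using P_prod[of A x g] by simp
  qed
  have PB: "P B (P y g) = scaleC (QQ (\<lambda>i j. - (int (y i) * int (B j)))) (P e g)"
  proof -
    have "(\<lambda>l. B l + y l) = e" by (rule ext) (simp add: B_def x_def y_def e_def evf_def)
    thus ?thesis using P_prod[of B y g] by simp
  qed
  have ci: "cinner (Ps B a') b' = cinner a' (scaleC (QQ (\<lambda>i j. - (int (B i) * int (B j)))) (P B b'))" for a' b'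
  proof -
    have "cinner (Ps B a') b' = cinner a' (adj (Ps B) b')" by (rule adj_right[OF Ps_bnd, symmetric])
    thus ?thesis by (simp only: adj_Ps)
  qed
  have LHS: "cinner (Tdc k q T z (scaleC ((-1) ^ card v * lam v) (P x g))) (scaleC ((-1) ^ card w * lam w) (P y g))
     = ((-1) ^ card v * lam v) * cnj ((-1) ^ card w * lam w) * c * cnj (QQ (\<lambda>i j. - (int (B i) * int (B j))))
       * QQ (\<lambda>i j. - (int (x i) * int (A j))) * cnj (QQ (\<lambda>i j. - (int (y i) * int (B j)))) * cinner (P e g) (P e g)"
    by (simp add: Tz ci PA PB bop_scale[OF P_bnd] bop_scale[OF Ps_bnd] cinner_scaleC_left cinner_scaleC_right
        mult_ac)
  have sc: "lam v * cnj (lam w) * c * cnj (QQ (\<lambda>i j. - (int (B i) * int (B j))))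
       * QQ (\<lambda>i j. - (int (x i) * int (A j))) * cnj (QQ (\<lambda>i j. - (int (y i) * int (B j)))) = 1"
  proof -
    have "lam v * cnj (lam w) * c * cnj (QQ (\<lambda>i j. - (int (B i) * int (B j))))
       * QQ (\<lambda>i j. - (int (x i) * int (A j))) * cnj (QQ (\<lambda>i j. - (int (y i) * int (B j)))) = QQ (\<lambda>i j. 0)"
      unfolding lam_def c_def QQ_cnj x_def[symmetric] y_def[symmetric] mult.assoc QQ_mult
      by (rule QQ_cong)
         (simp add: z_def gdc_mult_fst gdc_inv_fst gdc_inv_snd sv_def A_def B_def x_def y_def evf_def
           split: if_splits)
    thus ?thesis by simp
  qed
  have "cinner (Tdc k q T z (scaleC ((-1) ^ card v * lam v) (P x g))) (scaleC ((-1) ^ card w * lam w) (P y g))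
     = (-1) ^ (card v + card w) * cinner (P e g) (P e g)"
    unfolding LHS using sc by (simp add: power_add mult_ac)
  thus ?thesis by (simp add: z_def x_def y_def e_def)
qed


lemma sv_carrier: "sv v \<in> carrier (Gdc k)"
  unfolding Gdc_simps gdc_carrier_iff sv_def evf_def by simp

lemma sv_set: "v \<subseteq> {1..k} \<Longrightarrow> {l. snd (sv v) l \<noteq> 0} = v"
  by (auto simp: sv_def evf_def)

lemma pd_imp_S:
  assumes pd: "positive_definite (Gdc k) (Tdc k q T)" and u: "u \<subseteq> {1..k}"
  shows "positive_op (S_op k q T u)"
  unfolding positive_op_def
proof
  fix g
  define Hv where "Hv = (\<lambda>v. scaleC ((-1) ^ card v * lam v) (P (evf v) g))"
  define h where "h = (\<lambda>x. if x \<in> sv ` Pow u then Hv {l. snd x l \<noteq> 0} else 0)"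
  have fu: "finite u" using u finite_subset by blast
  have hsv: "h (sv v) = Hv v" if "v \<in> Pow u" for v
    using that u by (auto simp: h_def sv_set)
  have inj: "inj_on sv (Pow u)"
  proof (rule inj_onI)
    fix v w assume vw: "v \<in> Pow u" "w \<in> Pow u" "sv v = sv w"
    have v1: "v \<subseteq> {1..k}" using vw(1) u by blast
    have w1: "w \<subseteq> {1..k}" using vw(2) u by blast
    have "v = {l. snd (sv v) l \<noteq> 0}" using sv_set[OF v1] by simp
    also have "\<dots> = {l. snd (sv w) l \<noteq> 0}" using vw(3) by simp
    also have "\<dots> = w" using sv_set[OF w1] by simp
    finally show "v = w" .
  qed
  define Gs where "Gs = sv ` Pow u"
  define F where "F = {s \<in> carrier (Gdc k). h s \<noteq> 0}"
  have FG: "F \<subseteq> Gs" by (auto simp: F_def Gs_def h_def)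
  have finG: "finite Gs" using fu by (simp add: Gs_def)
  have finF: "finite F" using FG finG finite_subset by blast
  have Gc: "Gs \<subseteq> carrier (Gdc k)" unfolding Gs_def using sv_carrier by blast
  have "cnonneg (\<Sum>s\<in>F. \<Sum>t\<in>F. cinner (Tdc k q T (inv\<^bsub>Gdc k\<^esub> t \<otimes>\<^bsub>Gdc k\<^esub> s) (h s)) (h t))"
  proof -
    have pd2: "\<forall>h :: gdc_elem \<Rightarrow> 'a. finite {s\<in>carrier (Gdc k). h s \<noteq> 0} \<longrightarrow>
        (let F = {s\<in>carrier (Gdc k). h s \<noteq> 0} in
          cnonneg (\<Sum>s\<in>F. \<Sum>t\<in>F. cinner (Tdc k q T (inv\<^bsub>Gdc k\<^esub> t \<otimes>\<^bsub>Gdc k\<^esub> s) (h s)) (h t)))"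
      using pd unfolding positive_definite_def by (rule conjunct2)
    have "let F = {s\<in>carrier (Gdc k). h s \<noteq> 0} in
          cnonneg (\<Sum>s\<in>F. \<Sum>t\<in>F. cinner (Tdc k q T (inv\<^bsub>Gdc k\<^esub> t \<otimes>\<^bsub>Gdc k\<^esub> s) (h s)) (h t))"
      using pd2 finF unfolding F_def by blast
    thus ?thesis unfolding Let_def F_def .
  qed
  also have "(\<Sum>s\<in>F. \<Sum>t\<in>F. cinner (Tdc k q T (inv\<^bsub>Gdc k\<^esub> t \<otimes>\<^bsub>Gdc k\<^esub> s) (h s)) (h t))
     = (\<Sum>s\<in>Gs. \<Sum>t\<in>Gs. cinner (Tdc k q T (inv\<^bsub>Gdc k\<^esub> t \<otimes>\<^bsub>Gdc k\<^esub> s) (h s)) (h t))"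
  proof -
    have z1: "h s = 0" if "s \<in> Gs - F" for s using that Gc by (auto simp: F_def)
    have "(\<Sum>s\<in>F. \<Sum>t\<in>F. cinner (Tdc k q T (inv\<^bsub>Gdc k\<^esub> t \<otimes>\<^bsub>Gdc k\<^esub> s) (h s)) (h t))
       = (\<Sum>s\<in>F. \<Sum>t\<in>Gs. cinner (Tdc k q T (inv\<^bsub>Gdc k\<^esub> t \<otimes>\<^bsub>Gdc k\<^esub> s) (h s)) (h t))"
      by (intro sum.cong refl sum.mono_neutral_left finG FG) (simp add: z1)
    also have "\<dots> = (\<Sum>s\<in>Gs. \<Sum>t\<in>Gs. cinner (Tdc k q T (inv\<^bsub>Gdc k\<^esub> t \<otimes>\<^bsub>Gdc k\<^esub> s) (h s)) (h t))"
      by (intro sum.mono_neutral_left finG FG) (simp add: z1 bop_zero[OF Tdc_bnd])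
    finally show ?thesis .
  qed
  also have "\<dots> = (\<Sum>v\<in>Pow u. \<Sum>w\<in>Pow u. cinner (Tdc k q T (inv\<^bsub>Gdc k\<^esub> (sv w) \<otimes>\<^bsub>Gdc k\<^esub> (sv v)) (h (sv v))) (h (sv w)))"
    unfolding Gs_def using inj by (simp add: sum.reindex)
  also have "\<dots> = (\<Sum>v\<in>Pow u. \<Sum>w\<in>Pow u. (-1) ^ (card v + card w) * cinner (P (evf (v \<union> w)) g) (P (evf (v \<union> w)) g))"
    by (intro sum.cong refl) (simp add: hsv Hv_def Gdc_inv[OF sv_carrier] term2)
  also have "\<dots> = (\<Sum>r\<in>Pow u. (-1) ^ card r * cinner (P (evf r) g) (P (evf r) g))"
    by (rule comb_ident[OF fu])
  also have "\<dots> = cinner (S_op k q T u g) g"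
    by (simp add: S_op_eq cinner_sum_left cinner_scaleC_left adj_left[OF P_bnd])
  finally show "cnonneg (cinner (S_op k q T u g) g)" .
qed

lemma main:
  "positive_definite (Gdc k) (Tdc k q T) \<longleftrightarrow> (\<forall>u. u \<subseteq> {1..k} \<longrightarrow> positive_op (S_op k q T u))"
proof
  assume "positive_definite (Gdc k) (Tdc k q T)"
  thus "\<forall>u. u \<subseteq> {1..k} \<longrightarrow> positive_op (S_op k q T u)" using pd_imp_S by blast
next
  assume S: "\<forall>u. u \<subseteq> {1..k} \<longrightarrow> positive_op (S_op k q T u)"
  show "positive_definite (Gdc k) (Tdc k q T)"
    unfolding positive_definite_def Let_def
  proof (intro conjI ballI allI impI)
    fix s assume "s \<in> carrier (Gdc k)"
    thus "Tdc k q T (inv\<^bsub>Gdc k\<^esub> s) = adj (Tdc k q T s)" by (rule Tdc_inv)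
  next
    fix h :: "gdc_elem \<Rightarrow> 'a"
    assume fin: "finite {s \<in> carrier (Gdc k). h s \<noteq> 0}"
    show "cnonneg (\<Sum>s\<in>{s \<in> carrier (Gdc k). h s \<noteq> 0}. \<Sum>t\<in>{s \<in> carrier (Gdc k). h s \<noteq> 0}.
            cinner (Tdc k q T (inv\<^bsub>Gdc k\<^esub> t \<otimes>\<^bsub>Gdc k\<^esub> s) (h s)) (h t))"
      by (rule pd_sum) (use S fin in auto)
  qed
qed

end


theorem theorem4p4:
  fixes k :: nat
    and T :: "nat \<Rightarrow> 'a::chilbert \<Rightarrow> 'a"
    and q :: "nat \<Rightarrow> nat \<Rightarrow> complex"
  assumes contr: "\<And>i. 1 \<le> i \<Longrightarrow> i \<le> k \<Longrightarrow> contraction (T i)"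
    and q_circle: "\<And>i j. 1 \<le> i \<Longrightarrow> i < j \<Longrightarrow> j \<le> k \<Longrightarrow> cmod (q i j) = 1"
    and q_comm: "\<And>i j. 1 \<le> i \<Longrightarrow> i < j \<Longrightarrow> j \<le> k \<Longrightarrow>
                   T i \<circ> T j = (\<lambda>h. scaleC (q i j) (T j (T i h)))"
  shows "positive_definite (Gdc k) (Tdc k q T) \<longleftrightarrow>
         (\<forall>u. u \<subseteq> {1..k} \<longrightarrow> positive_op (S_op k q T u))"
proof -
  interpret qsys k T q
    by unfold_locales (fact contr, fact q_circle, fact q_comm)
  show ?thesis by (rule main)
qed

end
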